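(* Let $E$ be a locally compact Polish space and let $T$ be a $\mathcal{C}_b$-semigroup of kernel operators on $\mathcal{B}_b(E)$ of type $(M,\omega)$ consisting of strong Feller operators, with full generator $\hat A$ and Laplace transform $(R(\lambda))_{\operatorname{Re}\lambda>\omega}$. Let $\hat B$ and $\hat B_n$, $n\in\mathds{N}$, be single-valued linear operators on $\mathcal{B}_b(E)$ with $D(\hat A)$ contained in their domains, each of which satisfies: (i) for every $t>0$, the operator ($\hat B$ resp. $\hat B_n$)$\,T(t)$ defined on $D(\hat A)$ extends to a kernel operator on $\mathcal{B}_b(E)$; (ii) ($\hat B$ resp. $\hat B_n$)$\,R(\lambda)$ is a kernel operator for all $\lambda>\omega$; (iii) $(t,x)\mapsto$ ($\hat B$ resp. $\hat B_n$)$\,T(t)f(x)$ is measurable for $f\in\mathcal{B}_b(E)$; (iv) its operator norm is bounded by a function $\varphi(t)$ integrable near $0$. Assume moreover: (1) $\sup_{n\in\mathds{N}}\|\hat B_nR(\lambda)\|\to0$ as $\lambda\to\infty$; (2) for every $h\in\mathcal{B}_b(E)$ and large enough $\lambda$, $\hat B_nR(\lambda)h\rightharpoonup\hat BR(\lambda)h$; (3) whenever $(h_n)\subset\mathcal{B}_b(E)$ satisfies $h_n\rightharpoonup0$, then $\hat B_nR(\lambda)h_n\rightharpoonup0$ for large enough $\lambda$. Then for all sufficiently large $\lambda$ and all $f\in\mathcal{B}_b(E)$, \[(\lambda-(\hat A+\hat B_n))^{-1}f\rightharpoonup(\lambda-(\hat A+\hat B))^{-1}f.\]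
   Context: Notation as follows. Kernel operator: $Tf(x)=\int f(y)k(x,dy)$ with a bounded kernel ($x\mapsto k(x,B)$ measurable, $k(x,\cdot)$ signed measure, $\sup_x|k|(x,E)<\infty$). Semigroup of kernel operators of type $(M,\omega)$: kernel operators $T(t)$, $t>0$, with $T(t+s)=T(t)T(s)$, $\|T(t)\|\le Me^{\omega t}$, $(t,x)\mapsto T(t)f(x)$ measurable. $R(\lambda)f(x)=\int_0^\infty e^{-\lambda t}T(t)f(x)dt$. Full generator $\hat A=\{(f,g):T(t)f-f=\int_0^tT(s)g\,ds\ \forall t>0\}$ (a multivalued operator with $R(\lambda)=(\lambda-\hat A)^{-1}$). $\mathcal{C}_b$-semigroup: leaves bounded continuous functions invariant and $T(t)f\to f$ boundedly pointwise as $t\to 0$ for such $f$. Strong Feller: maps $\mathcal{B}_b(E)$ into bounded continuous functions. $\hat A+\hat B=\{(u,f+\hat Bu):(u,f)\in\hat A\}$ and $(\lambda-(\hat A+\hat B))^{-1}$ is the inverse of the multivalued operator $\lambda-(\hat A+\hat B)$. $h_n\rightharpoonup h$ means convergence in $\sigma(\mathcal{B}_b(E),\mathcal{M}_b(E))$, i.e. $\int h_n\,d\mu\to\int h\,d\mu$ for every bounded signed measure $\mu$; for sequences this is equivalent to $\sup_n\|h_n\|_\infty<\infty$ and pointwise convergence. *)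

theory Defs
  imports "HOL-Analysis.Analysis"
begin

text \<open>Operators on B_b(E) are modelled as maps (E \<Rightarrow> real) \<Rightarrow> (E \<Rightarrow> real);
  only their values on bounded Borel functions matter.\<close>

definition Bb :: "('a::topological_space \<Rightarrow> real) set" where
  "Bb = {f. f \<in> borel_measurable borel \<and> bounded (range f)}"

definition Cb :: "('a::topological_space \<Rightarrow> real) \<Rightarrow> bool" where
  "Cb f \<longleftrightarrow> continuous_on UNIV f \<and> bounded (range f)"

definition supn :: "('a \<Rightarrow> real) \<Rightarrow> real" where
  "supn f = (SUP x. \<bar>f x\<bar>)"

definition op_bound ::
  "(('a::topological_space \<Rightarrow> real) \<Rightarrow> ('a \<Rightarrow> real)) \<Rightarrow> real \<Rightarrow> bool" where
  "op_bound K c \<longleftrightarrow> (\<forall>f\<in>Bb. \<forall>x. \<bar>K f x\<bar> \<le> c * supn f)"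

text \<open>Kernel operator with a bounded signed kernel k = kp - km (Jordan-type decomposition
  into two bounded finite measure kernels).\<close>
definition kernel_op ::
  "(('a::topological_space \<Rightarrow> real) \<Rightarrow> ('a \<Rightarrow> real)) \<Rightarrow> bool" where
  "kernel_op K \<longleftrightarrow> (\<exists>kp km :: 'a \<Rightarrow> 'a measure.
     (\<forall>x. sets (kp x) = sets borel \<and> sets (km x) = sets borel
          \<and> finite_measure (kp x) \<and> finite_measure (km x)) \<and>
     (\<forall>B\<in>sets borel. (\<lambda>x. measure (kp x) B) \<in> borel_measurable borel
          \<and> (\<lambda>x. measure (km x) B) \<in> borel_measurable borel) \<and>
     (\<exists>C. \<forall>x. measure (kp x) UNIV + measure (km x) UNIV \<le> C) \<and>
     (\<forall>f\<in>Bb. \<forall>x. K f x = integral\<^sup>L (kp x) f - integral\<^sup>L (km x) f))"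

definition kernel_semigroup ::
  "real \<Rightarrow> real \<Rightarrow> (real \<Rightarrow> ('a::topological_space \<Rightarrow> real) \<Rightarrow> ('a \<Rightarrow> real)) \<Rightarrow> bool" where
  "kernel_semigroup M \<omega> T \<longleftrightarrow>
     (\<forall>t>0. kernel_op (T t)) \<and>
     (\<forall>t>0. \<forall>s>0. \<forall>f\<in>Bb. T (t + s) f = T t (T s f)) \<and>
     (\<forall>t>0. op_bound (T t) (M * exp (\<omega> * t))) \<and>
     (\<forall>f\<in>Bb. (\<lambda>p. T (fst p) f (snd p))
        \<in> borel_measurable (restrict_space (borel :: (real \<times> 'a) measure) ({0<..} \<times> UNIV)))"

definition Cb_semigroup ::
  "(real \<Rightarrow> ('a::topological_space \<Rightarrow> real) \<Rightarrow> ('a \<Rightarrow> real)) \<Rightarrow> bool" where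
  "Cb_semigroup T \<longleftrightarrow> (\<forall>f. Cb f \<longrightarrow>
     (\<forall>t>0. Cb (T t f)) \<and>
     (\<exists>\<delta>>0. \<exists>C. \<forall>t\<in>{0<..<\<delta>}. \<forall>x. \<bar>T t f x\<bar> \<le> C) \<and>
     (\<forall>x. ((\<lambda>t. T t f x) \<longlongrightarrow> f x) (at_right 0)))"

definition strong_Feller_semigroup ::
  "(real \<Rightarrow> ('a::topological_space \<Rightarrow> real) \<Rightarrow> ('a \<Rightarrow> real)) \<Rightarrow> bool" where
  "strong_Feller_semigroup T \<longleftrightarrow> (\<forall>t>0. \<forall>f\<in>Bb. Cb (T t f))"

definition laplace ::
  "(real \<Rightarrow> ('a::topological_space \<Rightarrow> real) \<Rightarrow> ('a \<Rightarrow> real)) \<Rightarrow> real \<Rightarrow> ('a \<Rightarrow> real) \<Rightarrow> ('a \<Rightarrow> real)" where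
  "laplace T l f = (\<lambda>x. LINT t:{0<..}|lborel. exp (- l * t) * T t f x)"

definition full_gen ::
  "(real \<Rightarrow> ('a::topological_space \<Rightarrow> real) \<Rightarrow> ('a \<Rightarrow> real)) \<Rightarrow> (('a \<Rightarrow> real) \<times> ('a \<Rightarrow> real)) set" where
  "full_gen T = {(f, g). f \<in> Bb \<and> g \<in> Bb \<and>
     (\<forall>t>0. \<forall>x. T t f x - f x = (LINT s:{0<..t}|lborel. T s g x))}"

definition admissible_pert ::
  "(real \<Rightarrow> ('a::topological_space \<Rightarrow> real) \<Rightarrow> ('a \<Rightarrow> real)) \<Rightarrow> real \<Rightarrow>
   ('a \<Rightarrow> real) set \<Rightarrow> (('a \<Rightarrow> real) \<Rightarrow> ('a \<Rightarrow> real)) \<Rightarrow> bool" where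
  "admissible_pert T \<omega> DB B \<longleftrightarrow>
     DB \<subseteq> Bb \<and> Domain (full_gen T) \<subseteq> DB \<and> (\<forall>f\<in>DB. B f \<in> Bb) \<and>
     (\<forall>f\<in>DB. \<forall>g\<in>DB. \<forall>a::real.
        (\<lambda>x. f x + g x) \<in> DB \<and> (\<lambda>x. a * f x) \<in> DB \<and>
        B (\<lambda>x. f x + g x) = (\<lambda>x. B f x + B g x) \<and> B (\<lambda>x. a * f x) = (\<lambda>x. a * B f x)) \<and>
     (\<exists>BT :: real \<Rightarrow> ('a \<Rightarrow> real) \<Rightarrow> ('a \<Rightarrow> real).
        (\<forall>t>0. kernel_op (BT t) \<and> (\<forall>f\<in>Domain (full_gen T). BT t f = B (T t f))) \<and>
        (\<forall>f\<in>Bb. (\<lambda>p. BT (fst p) f (snd p))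
           \<in> borel_measurable (restrict_space (borel :: (real \<times> 'a) measure) ({0<..} \<times> UNIV))) \<and>
        (\<exists>\<phi> \<delta>. \<delta> > 0 \<and> set_integrable lborel {0<..\<delta>} (\<phi> :: real \<Rightarrow> real) \<and>
           (\<forall>t>0. op_bound (BT t) (\<phi> t)))) \<and>
     (\<forall>l>\<omega>. kernel_op (\<lambda>f. B (laplace T l f)))"

text \<open>(\<lambda> - (A + B))^{-1} as a relation of pairs (f, u), for A multivalued, B single-valued:
  A + B = {(u, g + B u) | (u,g) \<in> A}.\<close>
definition pert_res_rel ::
  "(('a \<Rightarrow> real) \<times> ('a \<Rightarrow> real)) set \<Rightarrow> (('a \<Rightarrow> real) \<Rightarrow> ('a \<Rightarrow> real)) \<Rightarrow> real
   \<Rightarrow> (('a \<Rightarrow> real) \<times> ('a \<Rightarrow> real)) set" where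
  "pert_res_rel A B l = {((\<lambda>x. l * u x - (g x + B u x)), u) | u g. (u, g) \<in> A}"

definition pert_res ::
  "(('a \<Rightarrow> real) \<times> ('a \<Rightarrow> real)) set \<Rightarrow> (('a \<Rightarrow> real) \<Rightarrow> ('a \<Rightarrow> real)) \<Rightarrow> real
   \<Rightarrow> ('a \<Rightarrow> real) \<Rightarrow> ('a \<Rightarrow> real)" where
  "pert_res A B l f = (THE u. (f, u) \<in> pert_res_rel A B l)"

text \<open>convergence in \<sigma>(B_b, M_b) for sequences: uniformly bounded + pointwise\<close>
definition wconv :: "(nat \<Rightarrow> 'a \<Rightarrow> real) \<Rightarrow> ('a \<Rightarrow> real) \<Rightarrow> bool" where
  "wconv hs h \<longleftrightarrow> (\<exists>C. \<forall>n x. \<bar>hs n x\<bar> \<le> C) \<and> (\<forall>x. (\<lambda>n. hs n x) \<longlonglongrightarrow> h x)"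

end

theory Submission
  imports Defs "HOL-Analysis.Analysis"
begin


lemma exp_tail:
  fixes c s :: real assumes c: "c > 0"
  shows "set_integrable lborel {s<..} (\<lambda>t. exp (- c * t))"
    "(LINT t:{s<..}|lborel. exp (- c * t)) = exp (- c * s) / c"
proof -
  have h: "((\<lambda>x::real. exp (- c * x)) has_integral (exp (- c * s) / c)) {s..}"
    using has_integral_exp_minus_to_infinity[OF c] .
  have ai: "(\<lambda>x::real. exp (- c * x)) absolutely_integrable_on {s..}"
    by (rule nonnegative_absolutely_integrable_1) (use h in \<open>auto simp: integrable_on_def\<close>)
  have si: "set_integrable lborel {s..} (\<lambda>t. exp (- c * t))"
    using ai unfolding set_integrable_def
    by (subst (asm) integrable_completion) (auto intro!: borel_measurable_continuous_on_indicator continuous_intros)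
  have v: "(LINT t:{s..}|lborel. exp (- c * t)) = exp (- c * s) / c"
    using set_borel_integral_eq_integral(2)[OF si] h by (simp add: integral_unique)
  show si2: "set_integrable lborel {s<..} (\<lambda>t. exp (- c * t))"
    by (rule set_integrable_subset[OF si]) auto
  have "(LINT t:{s<..}|lborel. exp (- c * t)) = (LINT t:{s..}|lborel. exp (- c * t))"
    by (rule set_integral_cong_set)
       (use si si2 AE_lborel_singleton[of s] in \<open>auto simp: set_borel_measurable_def set_integrable_def\<close>)
  with v show "(LINT t:{s<..}|lborel. exp (- c * t)) = exp (- c * s) / c" by simp
qed

lemma exp_tail':
  fixes c s :: real assumes c: "c > 0"
  shows "integrable lborel (\<lambda>t. indicator {s<..} t * exp (- c * t))"
    "(\<integral>t. indicator {s<..} t * exp (- c * t) \<partial>lborel) = exp (- c * s) / c"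
  using exp_tail[OF c, of s] unfolding set_integrable_def set_lebesgue_integral_def by auto

lemma exp_fin:
  fixes c t :: real assumes c: "c > 0" and t: "t \<ge> 0"
  shows "integrable lborel (\<lambda>s. indicator {0<..t} s * (c * exp (c * s)))"
    "(\<integral>s. indicator {0<..t} s * (c * exp (c * s)) \<partial>lborel) = exp (c * t) - 1"
proof -
  have h: "((\<lambda>s. c * exp (c * s)) has_integral (exp (c * t) - exp (c * 0))) {0..t}"
    using t by (intro fundamental_theorem_of_calculus)
         (auto intro!: derivative_eq_intros simp flip: has_real_derivative_iff_has_vector_derivative)
  have ai: "(\<lambda>s. c * exp (c * s)) absolutely_integrable_on {0..t}"
    by (rule nonnegative_absolutely_integrable_1) (use h c in \<open>auto simp: integrable_on_def\<close>)
  have si: "set_integrable lborel {0..t} (\<lambda>s. c * exp (c * s))"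
    using ai unfolding set_integrable_def
    by (subst (asm) integrable_completion) (auto intro!: borel_measurable_continuous_on_indicator continuous_intros)
  have v: "(LINT s:{0..t}|lborel. c * exp (c * s)) = exp (c * t) - 1"
  proof -
    have "(LINT s:{0..t}|lborel. c * exp (c * s)) = integral {0..t} (\<lambda>s. c * exp (c * s))"
      by (rule set_borel_integral_eq_integral(2)[OF si])
    also have "\<dots> = exp (c * t) - 1" using integral_unique[OF h] by simp
    finally show ?thesis .
  qed
  have si2: "set_integrable lborel {0<..t} (\<lambda>s. c * exp (c * s))"
    by (rule set_integrable_subset[OF si]) auto
  have "(LINT s:{0<..t}|lborel. c * exp (c * s)) = (LINT s:{0..t}|lborel. c * exp (c * s))"
  proof (rule set_integral_cong_set)
    show "AE x in lborel. (x \<in> {0..t}) = (x \<in> {0<..t})"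
      using AE_lborel_singleton[of 0] by eventually_elim auto
  qed (use si si2 in \<open>auto simp: set_borel_measurable_def set_integrable_def\<close>)
  with v si2 show "integrable lborel (\<lambda>s. indicator {0<..t} s * (c * exp (c * s)))"
    "(\<integral>s. indicator {0<..t} s * (c * exp (c * s)) \<partial>lborel) = exp (c * t) - 1"
    unfolding set_integrable_def set_lebesgue_integral_def by auto
qed


lemma ind_const_int: "integrable lborel (\<lambda>s::real. indicator {u<..v} s * (K::real))"
proof -
  have "integrable lborel (indicator {u<..v} :: real \<Rightarrow> real)"
    by (subst integrable_indicator_iff) (cases "u \<le> v", auto)
  then show ?thesis by (intro integrable_mult_left)
qed

lemma ind_closed_open:
  fixes g :: "real \<Rightarrow> real" assumes [measurable]: "g \<in> borel_measurable borel"
  shows "(\<integral>r. indicator {s..} r * g r \<partial>lborel) = (\<integral>r. indicator {s<..} r * g r \<partial>lborel)"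
    "integrable lborel (\<lambda>r. indicator {s..} r * g r) \<longleftrightarrow> integrable lborel (\<lambda>r. indicator {s<..} r * g r)"
proof -
  have ae: "AE r in lborel. indicator {s..} r * g r = indicator {s<..} r * g r"
    using AE_lborel_singleton[of s] by eventually_elim (auto simp: indicator_def)
  show "(\<integral>r. indicator {s..} r * g r \<partial>lborel) = (\<integral>r. indicator {s<..} r * g r \<partial>lborel)"
    by (rule integral_cong_AE[OF _ _ ae]) auto
  show "integrable lborel (\<lambda>r. indicator {s..} r * g r) \<longleftrightarrow> integrable lborel (\<lambda>r. indicator {s<..} r * g r)"
    by (rule integrable_cong_AE[OF _ _ ae]) auto
qed

definition Jf :: "(real \<Rightarrow> real) \<Rightarrow> real \<Rightarrow> real \<Rightarrow> real" where
  "Jf \<phi> l s = (\<integral>r. indicator {s<..} r * (exp (- l * r) * \<phi> r) \<partial>lborel)"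

locale scal =
  fixes \<phi> :: "real \<Rightarrow> real" and C a l :: real
  assumes meas[measurable]: "\<phi> \<in> borel_measurable borel"
    and bnd: "\<And>s. s > 0 \<Longrightarrow> \<bar>\<phi> s\<bar> \<le> C * exp (a * s)"
    and a0: "0 \<le> a" and al: "a < l"
begin

lemma l0: "l > 0" using a0 al by simp

lemma C0: "C \<ge> 0"
proof -
  have "0 \<le> \<bar>\<phi> 1\<bar>" by simp
  also have "\<dots> \<le> C * exp (a * 1)" by (rule bnd) simp
  finally show ?thesis by (simp add: zero_le_mult_iff)
qed

lemma pbound: "r > 0 \<Longrightarrow> \<bar>exp (- l * r) * \<phi> r\<bar> \<le> C * exp (- (l - a) * r)"
proof -
  assume r: "r > 0"
  have "\<bar>exp (- l * r) * \<phi> r\<bar> = exp (- l * r) * \<bar>\<phi> r\<bar>" by (simp add: abs_mult)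
  also have "\<dots> \<le> exp (- l * r) * (C * exp (a * r))" using bnd[OF r] by (intro mult_left_mono) auto
  also have "\<dots> = C * exp (- (l - a) * r)" by (simp add: algebra_simps flip: exp_add)
  finally show ?thesis .
qed

lemma tail_int:
  assumes s: "s \<ge> 0"
  shows "integrable lborel (\<lambda>r. indicator {s<..} r * (exp (- l * r) * \<phi> r))"
proof (rule Bochner_Integration.integrable_bound)
  show "integrable lborel (\<lambda>r. C * (indicator {s<..} r * exp (- (l - a) * r)))"
    using exp_tail'(1)[of "l - a" s] al by auto
  show "AE r in lborel. norm (indicator {s<..} r * (exp (- l * r) * \<phi> r))
      \<le> norm (C * (indicator {s<..} r * exp (- (l - a) * r)))"
    using pbound s C0 by (auto simp: indicator_def abs_mult)
qed auto

abbreviation J where "J \<equiv> Jf \<phi> l"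

lemma tail_abs_le:
  assumes s: "s \<ge> 0"
  shows "(\<integral>r. indicator {s<..} r * \<bar>exp (- l * r) * \<phi> r\<bar> \<partial>lborel) \<le> C / (l - a)"
proof -
  have "(\<integral>r. indicator {s<..} r * \<bar>exp (- l * r) * \<phi> r\<bar> \<partial>lborel)
      \<le> (\<integral>r. C * (indicator {0<..} r * exp (- (l - a) * r)) \<partial>lborel)"
  proof (rule integral_mono)
    show "integrable lborel (\<lambda>r. indicator {s<..} r * \<bar>exp (- l * r) * \<phi> r\<bar>)"
      using integrable_abs[OF tail_int[OF s]] by (simp add: abs_mult)
    show "integrable lborel (\<lambda>r. C * (indicator {0<..} r * exp (- (l - a) * r)))"
      using exp_tail'(1)[of "l - a" 0] al by auto
    fix r :: real
    show "indicator {s<..} r * \<bar>exp (- l * r) * \<phi> r\<bar> \<le> C * (indicator {0<..} r * exp (- (l - a) * r))"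
      using pbound[of r] s C0 by (auto simp: indicator_def)
  qed
  also have "\<dots> = C / (l - a)"
    using exp_tail'(2)[of "l - a" 0] al by simp
  finally show ?thesis .
qed

lemma J_bound: "s \<ge> 0 \<Longrightarrow> \<bar>J s\<bar> \<le> C / (l - a)"
proof -
  assume s: "s \<ge> 0"
  have "\<bar>J s\<bar> \<le> (\<integral>r. indicator {s<..} r * \<bar>exp (- l * r) * \<phi> r\<bar> \<partial>lborel)"
    unfolding Jf_def using Bochner_Integration.integral_norm_bound_integral[of lborel "\<lambda>r. indicator {s<..} r * (exp (- l * r) * \<phi> r)"
        "\<lambda>r. indicator {s<..} r * \<bar>exp (- l * r) * \<phi> r\<bar>"] tail_int[OF s] integrable_abs[OF tail_int[OF s]]
    by (simp add: abs_mult)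
  also have "\<dots> \<le> C / (l - a)" by (rule tail_abs_le[OF s])
  finally show ?thesis .
qed

lemma fin_int: "integrable lborel (\<lambda>r. indicator {0<..t} r * \<phi> r)"
proof (rule Bochner_Integration.integrable_bound)
  show "integrable lborel (\<lambda>r. indicator {0<..t} r * (C * exp (a * max t 0)))"
    by (rule ind_const_int)
  show "AE r in lborel. norm (indicator {0<..t} r * \<phi> r) \<le> norm (indicator {0<..t} r * (C * exp (a * max t 0)))"
  proof (rule AE_I2)
    fix r :: real
    show "norm (indicator {0<..t} r * \<phi> r) \<le> norm (indicator {0<..t} r * (C * exp (a * max t 0)))"
    proof (cases "r \<in> {0<..t}")
      case True
      then have "\<bar>\<phi> r\<bar> \<le> C * exp (a * r)" using bnd by auto
      also have "\<dots> \<le> C * exp (a * max t 0)" using True C0 a0 by (intro mult_left_mono) (auto intro!: mult_left_mono)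
      finally show ?thesis using True C0 by auto
    qed auto
  qed
qed auto

end


lemma meas_le_ind[measurable]:
  "(\<lambda>p::real\<times>real. indicator {fst p..} (snd p) :: real) \<in> borel_measurable (lborel \<Otimes>\<^sub>M lborel)"
proof -
  have "(\<lambda>p::real\<times>real. indicator {fst p..} (snd p) :: real) = (\<lambda>p. if fst p \<le> snd p then 1 else 0)"
    by (auto simp: indicator_def)
  also have "\<dots> \<in> borel_measurable (lborel \<Otimes>\<^sub>M lborel)" by measurable
  finally show ?thesis .
qed

lemma meas_less_ind[measurable]:
  "(\<lambda>p::real\<times>real. indicator {fst p<..} (snd p) :: real) \<in> borel_measurable (lborel \<Otimes>\<^sub>M lborel)"
proof -
  have "(\<lambda>p::real\<times>real. indicator {fst p<..} (snd p) :: real) = (\<lambda>p. if fst p < snd p then 1 else 0)"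
    by (auto simp: indicator_def)
  also have "\<dots> \<in> borel_measurable (lborel \<Otimes>\<^sub>M lborel)" by measurable
  finally show ?thesis .
qed

context scal begin

lemma uniq_formula:
  "l * (\<integral>t. indicator {0<..} t * (exp (- l * t) * (\<integral>s. indicator {0<..t} s * \<phi> s \<partial>lborel)) \<partial>lborel)
    = (\<integral>s. indicator {0<..} s * (exp (- l * s) * \<phi> s) \<partial>lborel)"
proof -
  define F where "F s t = indicator {0<..} s * \<phi> s * (indicator {s..} t * (l * exp (- l * t)))" for s t :: real
  have Fm: "case_prod F \<in> borel_measurable (lborel \<Otimes>\<^sub>M lborel)"
    unfolding F_def by measurable
  have tl: "(\<integral>t. indicator {s..} t * (l * exp (- l * t)) \<partial>lborel) = exp (- l * s)"
    "integrable lborel (\<lambda>t. indicator {s..} t * (l * exp (- l * t)))" for s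
  proof -
    have "(\<integral>t. indicator {s..} t * (l * exp (- l * t)) \<partial>lborel) = (\<integral>t. indicator {s<..} t * (l * exp (- l * t)) \<partial>lborel)"
      by (rule ind_closed_open) auto
    also have "\<dots> = l * (\<integral>t. indicator {s<..} t * exp (- l * t) \<partial>lborel)"
      by (simp add: mult.left_commute)
    also have "\<dots> = exp (- l * s)" using exp_tail'(2)[OF l0, of s] l0 by simp
    finally show "(\<integral>t. indicator {s..} t * (l * exp (- l * t)) \<partial>lborel) = exp (- l * s)" .
    have "integrable lborel (\<lambda>t. indicator {s<..} t * (l * exp (- l * t)))"
      using exp_tail'(1)[OF l0, of s] integrable_mult_right[of l lborel "\<lambda>t. indicator {s<..} t * exp (- l * t)"]
      by (simp add: mult.left_commute)
    then show "integrable lborel (\<lambda>t. indicator {s..} t * (l * exp (- l * t)))"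
      by (subst ind_closed_open(2)) auto
  qed
  have inner1: "(\<integral>t. F s t \<partial>lborel) = indicator {0<..} s * (exp (- l * s) * \<phi> s)" for s
    unfolding F_def using tl(1)[of s] by simp
  have inner1n: "(\<integral>t. norm (F s t) \<partial>lborel) = \<bar>indicator {0<..} s * (exp (- l * s) * \<phi> s)\<bar>" for s
  proof -
    have "(\<lambda>t. norm (F s t)) = (\<lambda>t. \<bar>indicator {0<..} s * \<phi> s\<bar> * (indicator {s..} t * (l * exp (- l * t))))"
      unfolding F_def using l0 by (auto simp: abs_mult indicator_def)
    then show ?thesis using tl(1)[of s] by (simp add: abs_mult)
  qed
  have intF: "integrable (lborel \<Otimes>\<^sub>M lborel) (case_prod F)"
  proof (rule lborel_pair.Fubini_integrable)
    show "case_prod F \<in> borel_measurable (lborel \<Otimes>\<^sub>M lborel)" by (rule Fm)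
    show "integrable lborel (\<lambda>s. \<integral>t. norm (case_prod F (s, t)) \<partial>lborel)"
      unfolding case_prod_conv inner1n using integrable_abs[OF tail_int[of 0]] by simp
    show "AE s in lborel. integrable lborel (\<lambda>t. case_prod F (s, t))"
      unfolding F_def case_prod_conv using tl(2) by auto
  qed
  have inner2: "(\<integral>s. F s t \<partial>lborel) = l * (indicator {0<..} t * (exp (- l * t) * (\<integral>s. indicator {0<..t} s * \<phi> s \<partial>lborel)))" for t
  proof -
    have "(\<lambda>s. F s t) = (\<lambda>s. (l * exp (- l * t)) * (indicator {0<..t} s * \<phi> s))"
      unfolding F_def by (auto simp: indicator_def)
    then have "(\<integral>s. F s t \<partial>lborel) = (l * exp (- l * t)) * (\<integral>s. indicator {0<..t} s * \<phi> s \<partial>lborel)"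
      by simp
    moreover have "t \<le> 0 \<Longrightarrow> (\<integral>s. indicator {0<..t} s * \<phi> s \<partial>lborel) = 0"
      by (simp add: indicator_def)
    ultimately show ?thesis by (cases "t > 0") auto
  qed
  have "(\<integral>t. (\<integral>s. F s t \<partial>lborel) \<partial>lborel) = (\<integral>s. (\<integral>t. F s t \<partial>lborel) \<partial>lborel)"
    by (rule lborel_pair.Fubini_integral[OF intF])
  then show ?thesis unfolding inner1 inner2 by simp
qed

end


context scal begin

lemma J_meas[measurable]: "J \<in> borel_measurable borel"
proof -
  have "J \<in> borel_measurable lborel" unfolding Jf_def by measurable
  then show ?thesis by simp
qed

lemma exist_formula:
  assumes t: "t \<ge> 0"
  shows "exp (l * t) * J t - J 0 = (\<integral>s. indicator {0<..t} s * (l * exp (l * s) * J s - \<phi> s) \<partial>lborel)"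
proof -
  define G where "G s r = indicator {0<..t} s * (l * exp (l * s)) * (indicator {s..} r * (exp (- l * r) * \<phi> r))" for s r :: real
  have Gm: "case_prod G \<in> borel_measurable (lborel \<Otimes>\<^sub>M lborel)"
    unfolding G_def by measurable
  have Gnm: "(\<lambda>s. \<integral>r. norm (G s r) \<partial>lborel) \<in> borel_measurable lborel"
    using Gm by measurable
  have inner1: "(\<integral>r. G s r \<partial>lborel) = indicator {0<..t} s * (l * exp (l * s) * J s)" for s
  proof -
    have "(\<integral>r. G s r \<partial>lborel) = indicator {0<..t} s * (l * exp (l * s)) * (\<integral>r. indicator {s..} r * (exp (- l * r) * \<phi> r) \<partial>lborel)"
      unfolding G_def by simp
    also have "(\<integral>r. indicator {s..} r * (exp (- l * r) * \<phi> r) \<partial>lborel) = J s"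
      unfolding Jf_def by (rule ind_closed_open) auto
    finally show ?thesis by simp
  qed
  have intG: "integrable (lborel \<Otimes>\<^sub>M lborel) (case_prod G)"
  proof (rule lborel_pair.Fubini_integrable)
    show "case_prod G \<in> borel_measurable (lborel \<Otimes>\<^sub>M lborel)" by (rule Gm)
    show "integrable lborel (\<lambda>s. \<integral>r. norm (case_prod G (s, r)) \<partial>lborel)"
      unfolding case_prod_conv
    proof (rule Bochner_Integration.integrable_bound)
      show "integrable lborel (\<lambda>s. indicator {0<..t} s * (l * exp (l * t) * (C / (l - a))))"
        by (rule ind_const_int)
      show "(\<lambda>s. \<integral>r. norm (G s r) \<partial>lborel) \<in> borel_measurable lborel" by (rule Gnm)
      show "AE s in lborel. norm (\<integral>r. norm (G s r) \<partial>lborel) \<le> norm (indicator {0<..t} s * (l * exp (l * t) * (C / (l - a))))"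
      proof (rule AE_I2)
        fix s :: real
        show "norm (\<integral>r. norm (G s r) \<partial>lborel) \<le> norm (indicator {0<..t} s * (l * exp (l * t) * (C / (l - a))))"
        proof (cases "s \<in> {0<..t}")
          case False
          then show ?thesis unfolding G_def by simp
        next
          case True
          have eq: "(\<lambda>r. norm (G s r)) = (\<lambda>r. (l * exp (l * s)) * (indicator {s..} r * \<bar>exp (- l * r) * \<phi> r\<bar>))"
            using True l0 unfolding G_def by (auto simp: indicator_def abs_mult)
          have "(\<integral>r. indicator {s..} r * \<bar>exp (- l * r) * \<phi> r\<bar> \<partial>lborel) = (\<integral>r. indicator {s<..} r * \<bar>exp (- l * r) * \<phi> r\<bar> \<partial>lborel)"
            by (rule ind_closed_open) auto
          also have "\<dots> \<le> C / (l - a)" using tail_abs_le[of s] True by auto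
          finally have i1: "(\<integral>r. indicator {s..} r * \<bar>exp (- l * r) * \<phi> r\<bar> \<partial>lborel) \<le> C / (l - a)" .
          have i0: "0 \<le> (\<integral>r. indicator {s..} r * \<bar>exp (- l * r) * \<phi> r\<bar> \<partial>lborel)"
            by (rule integral_nonneg_AE) auto
          have "(\<integral>r. norm (G s r) \<partial>lborel) = (l * exp (l * s)) * (\<integral>r. indicator {s..} r * \<bar>exp (- l * r) * \<phi> r\<bar> \<partial>lborel)"
            unfolding eq by simp
          also have "\<dots> \<le> (l * exp (l * t)) * (C / (l - a))"
            using True l0 i1 i0 C0 al by (intro mult_mono) auto
          finally show ?thesis using True i0 l0 C0 al by (simp add: abs_mult)
        qed
      qed
    qed
    show "AE s in lborel. integrable lborel (\<lambda>r. case_prod G (s, r))"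
    proof (rule AE_I2)
      fix s :: real
      show "integrable lborel (\<lambda>r. case_prod G (s, r))"
      proof (cases "s \<in> {0<..t}")
        case False
        then show ?thesis unfolding G_def by simp
      next
        case True
        have "integrable lborel (\<lambda>r. indicator {s..} r * (exp (- l * r) * \<phi> r))"
          using tail_int[of s] True by (subst ind_closed_open(2)) auto
        then show ?thesis unfolding G_def case_prod_conv
          by (intro integrable_mult_right)
      qed
    qed
  qed
  have inner2: "(\<integral>s. G s r \<partial>lborel) = indicator {0<..} r * (exp (- l * r) * \<phi> r) * (exp (l * min t r) - 1)" for r
  proof (cases "r > 0")
    case False
    then have "(\<lambda>s. G s r) = (\<lambda>s. 0)" unfolding G_def by (auto simp: indicator_def)
    then show ?thesis using False by simp
  next
    case True
    have "(\<lambda>s. G s r) = (\<lambda>s. (exp (- l * r) * \<phi> r) * (indicator {0<..min t r} s * (l * exp (l * s))))"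
      unfolding G_def by (auto simp: indicator_def)
    then have "(\<integral>s. G s r \<partial>lborel) = (exp (- l * r) * \<phi> r) * (\<integral>s. indicator {0<..min t r} s * (l * exp (l * s)) \<partial>lborel)"
      by simp
    also have "\<dots> = (exp (- l * r) * \<phi> r) * (exp (l * min t r) - 1)"
      using exp_fin(2)[OF l0, of "min t r"] True t by simp
    finally show ?thesis using True by simp
  qed
  have pw: "indicator {0<..} r * (exp (- l * r) * \<phi> r) * (exp (l * min t r) - 1)
      = indicator {0<..t} r * \<phi> r + exp (l * t) * (indicator {t<..} r * (exp (- l * r) * \<phi> r))
        - indicator {0<..} r * (exp (- l * r) * \<phi> r)" for r
  proof -
    have e1: "exp (- l * r) * exp (l * r) = 1" by (simp flip: exp_add)
    show ?thesis
    proof (cases "r > 0")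
      case False then show ?thesis using t by (auto simp: indicator_def)
    next
      case True
      show ?thesis
      proof (cases "r \<le> t")
        case True
        then have "min t r = r" by simp
        then show ?thesis using True \<open>r > 0\<close> e1 by (auto simp: indicator_def algebra_simps)
      next
        case False
        then show ?thesis using \<open>r > 0\<close> by (auto simp: indicator_def algebra_simps)
      qed
    qed
  qed
  have "(\<integral>r. (\<integral>s. G s r \<partial>lborel) \<partial>lborel) = (\<integral>s. (\<integral>r. G s r \<partial>lborel) \<partial>lborel)"
    by (rule lborel_pair.Fubini_integral[OF intG])
  also have "(\<integral>r. (\<integral>s. G s r \<partial>lborel) \<partial>lborel)
     = (\<integral>r. indicator {0<..t} r * \<phi> r + exp (l * t) * (indicator {t<..} r * (exp (- l * r) * \<phi> r))
        - indicator {0<..} r * (exp (- l * r) * \<phi> r) \<partial>lborel)"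
    unfolding inner2 pw ..
  also have "\<dots> = (\<integral>r. indicator {0<..t} r * \<phi> r \<partial>lborel) + exp (l * t) * J t - J 0"
    unfolding Jf_def using fin_int[of t] tail_int[of t] tail_int[of 0] t by simp
  finally have F: "(\<integral>s. indicator {0<..t} s * (l * exp (l * s) * J s) \<partial>lborel)
      = (\<integral>r. indicator {0<..t} r * \<phi> r \<partial>lborel) + exp (l * t) * J t - J 0"
    unfolding inner1 by simp
  have I1: "integrable lborel (\<lambda>s. indicator {0<..t} s * (l * exp (l * s) * J s))"
    using lborel_pair.integrable_fst'[OF intG] unfolding case_prod_conv inner1 .
  have "(\<integral>s. indicator {0<..t} s * (l * exp (l * s) * J s - \<phi> s) \<partial>lborel)
      = (\<integral>s. indicator {0<..t} s * (l * exp (l * s) * J s) - indicator {0<..t} s * \<phi> s \<partial>lborel)"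
    by (simp add: algebra_simps)
  also have "\<dots> = (\<integral>s. indicator {0<..t} s * (l * exp (l * s) * J s) \<partial>lborel) - (\<integral>s. indicator {0<..t} s * \<phi> s \<partial>lborel)"
    by (rule Bochner_Integration.integral_diff[OF I1 fin_int])
  finally show ?thesis unfolding F by simp
qed

end


lemma BbI: "f \<in> borel_measurable borel \<Longrightarrow> (\<And>x. \<bar>f x\<bar> \<le> C) \<Longrightarrow> f \<in> Bb"
  unfolding Bb_def bounded_real by auto

lemma Bb_meas[measurable_dest]: "f \<in> Bb \<Longrightarrow> f \<in> borel_measurable borel"
  unfolding Bb_def by auto

lemma Bb_bnd: "f \<in> Bb \<Longrightarrow> \<exists>C. \<forall>x. \<bar>f x\<bar> \<le> C"
  unfolding Bb_def bounded_real by auto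

lemma supn_ge: "f \<in> Bb \<Longrightarrow> \<bar>f x\<bar> \<le> supn f"
proof -
  assume f: "f \<in> Bb"
  then obtain C where "\<forall>x. \<bar>f x\<bar> \<le> C" using Bb_bnd by blast
  then have "bdd_above (range (\<lambda>x. \<bar>f x\<bar>))" by (auto intro: bdd_aboveI2)
  then show ?thesis unfolding supn_def using cSUP_upper[of x UNIV "\<lambda>x. \<bar>f x\<bar>"] by simp
qed

lemma supn_nonneg: "f \<in> Bb \<Longrightarrow> 0 \<le> supn f"
  using supn_ge[of f undefined] by (meson abs_ge_zero order_trans)

lemma supn_le: "(\<And>x. \<bar>f x\<bar> \<le> c) \<Longrightarrow> supn f \<le> c"
  unfolding supn_def by (rule cSUP_least) auto

lemma Bb_add: "f \<in> Bb \<Longrightarrow> g \<in> Bb \<Longrightarrow> (\<lambda>x. f x + g x) \<in> Bb"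
proof -
  assume f: "f \<in> Bb" and g: "g \<in> Bb"
  show ?thesis
    by (rule BbI[where C="supn f + supn g"]) (use f g supn_ge[OF f] supn_ge[OF g] in \<open>auto intro!: abs_triangle_ineq[THEN order_trans] add_mono\<close>)
qed

lemma Bb_scale: "f \<in> Bb \<Longrightarrow> (\<lambda>x. c * f x) \<in> Bb"
proof -
  assume f: "f \<in> Bb"
  show ?thesis
    by (rule BbI[where C="\<bar>c\<bar> * supn f"]) (use f supn_ge[OF f] in \<open>auto simp: abs_mult intro!: mult_left_mono\<close>)
qed

lemma Bb_diff: "f \<in> Bb \<Longrightarrow> g \<in> Bb \<Longrightarrow> (\<lambda>x. f x - g x) \<in> Bb"
  using Bb_add[of f "\<lambda>x. (-1) * g x"] Bb_scale[of g "-1"] by simp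

lemma Bb_zero: "(\<lambda>x. 0) \<in> Bb"
  by (rule BbI[where C=0]) auto

lemma int_Bb:
  assumes "finite_measure \<mu>" "sets \<mu> = sets borel" "f \<in> Bb"
  shows "integrable \<mu> f"
proof -
  interpret finite_measure \<mu> by fact
  obtain C where C: "\<forall>x. \<bar>f x\<bar> \<le> C" using Bb_bnd[OF assms(3)] by blast
  have mc: "measurable \<mu> (borel::real measure) = measurable borel borel"
    by (rule measurable_cong_sets[OF assms(2)]) simp
  have m: "f \<in> borel_measurable \<mu>"
    using Bb_meas[OF assms(3)] mc by simp
  show ?thesis by (rule integrable_const_bound[where B=C]) (use C m in auto)
qed

definition kreps :: "(('a::topological_space \<Rightarrow> real) \<Rightarrow> ('a \<Rightarrow> real)) \<Rightarrow> ('a \<Rightarrow> 'a measure) \<Rightarrow> ('a \<Rightarrow> 'a measure) \<Rightarrow> bool" where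
  "kreps K kp km \<longleftrightarrow> (\<forall>x. sets (kp x) = sets borel \<and> sets (km x) = sets borel
          \<and> finite_measure (kp x) \<and> finite_measure (km x)) \<and>
     (\<forall>f\<in>Bb. \<forall>x. K f x = integral\<^sup>L (kp x) f - integral\<^sup>L (km x) f)"

lemma kernel_op_kreps: "kernel_op K \<Longrightarrow> \<exists>kp km. kreps K kp km"
  unfolding kernel_op_def kreps_def by blast

lemma K_add:
  assumes K: "kernel_op K" and f: "f \<in> Bb" and g: "g \<in> Bb"
  shows "K (\<lambda>x. f x + g x) x = K f x + K g x"
proof -
  obtain kp km where k: "kreps K kp km" using kernel_op_kreps[OF K] by blast
  have i: "integrable (kp x) h" "integrable (km x) h" if "h \<in> Bb" for h
    using k that unfolding kreps_def by (auto intro: int_Bb)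
  show ?thesis using k i[OF f] i[OF g] Bb_add[OF f g] f g unfolding kreps_def by simp
qed

lemma K_scale:
  assumes K: "kernel_op K" and f: "f \<in> Bb"
  shows "K (\<lambda>x. c * f x) x = c * K f x"
proof -
  obtain kp km where k: "kreps K kp km" using kernel_op_kreps[OF K] by blast
  have e1: "K (\<lambda>y. c * f y) x = integral\<^sup>L (kp x) (\<lambda>y. c * f y) - integral\<^sup>L (km x) (\<lambda>y. c * f y)"
    using k Bb_scale[OF f] unfolding kreps_def by blast
  have e2: "K f x = integral\<^sup>L (kp x) f - integral\<^sup>L (km x) f"
    using k f unfolding kreps_def by blast
  show ?thesis by (simp add: e1 e2 algebra_simps)
qed

lemma K_diff:
  assumes K: "kernel_op K" and f: "f \<in> Bb" and g: "g \<in> Bb"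
  shows "K (\<lambda>x. f x - g x) x = K f x - K g x"
  using K_add[OF K f, of "\<lambda>x. (-1) * g x"] K_scale[OF K g, of "-1"] Bb_scale[OF g, of "-1"] by simp

lemma K_dct:
  assumes K: "kernel_op K" and fs: "\<And>n. fs n \<in> Bb" and f: "f \<in> Bb"
    and D: "\<And>n y. \<bar>fs n y\<bar> \<le> D" and lim: "\<And>y. (\<lambda>n. fs n y) \<longlonglongrightarrow> f y"
  shows "(\<lambda>n. K (fs n) x) \<longlonglongrightarrow> K f x"
proof -
  obtain kp km where k: "kreps K kp km" using kernel_op_kreps[OF K] by blast
  have c: "(\<lambda>n. integral\<^sup>L \<mu> (fs n)) \<longlonglongrightarrow> integral\<^sup>L \<mu> f" if "finite_measure \<mu>" "sets \<mu> = sets borel" for \<mu>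
  proof -
    interpret finite_measure \<mu> by fact
    have mc: "measurable \<mu> (borel :: real measure) = measurable borel borel"
      by (rule measurable_cong_sets[OF that(2)]) simp
    show ?thesis
    proof (rule integral_dominated_convergence[where w="\<lambda>_. D"])
      show "f \<in> borel_measurable \<mu>" using Bb_meas[OF f] mc by simp
      show "fs n \<in> borel_measurable \<mu>" for n using Bb_meas[OF fs] mc by simp
      show "integrable \<mu> (\<lambda>_. D)" by simp
      show "AE x in \<mu>. (\<lambda>i. fs i x) \<longlonglongrightarrow> f x" using lim by simp
      show "AE x in \<mu>. norm (fs n x) \<le> D" for n using D by simp
    qed
  qed
  have "(\<lambda>n. integral\<^sup>L (kp x) (fs n) - integral\<^sup>L (km x) (fs n)) \<longlonglongrightarrow> integral\<^sup>L (kp x) f - integral\<^sup>L (km x) f"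
    using k unfolding kreps_def by (intro tendsto_diff c) auto
  then show ?thesis using k fs f unfolding kreps_def by simp
qed


lemma K_fubini:
  fixes F :: "real \<Rightarrow> 'a::topological_space \<Rightarrow> real"
  assumes K: "kernel_op K"
    and Fm: "(\<lambda>p. indicator {0<..} (fst p) * F (fst p) (snd p)) \<in> borel_measurable (lborel \<Otimes>\<^sub>M (borel :: 'a measure))"
    and Fb: "\<And>s y. s > 0 \<Longrightarrow> \<bar>F s y\<bar> \<le> w s"
    and w: "integrable lborel (\<lambda>s. indicator {0<..} s * w s)"
    and FBb: "\<And>s. s > 0 \<Longrightarrow> F s \<in> Bb"
    and GBb: "(\<lambda>y. \<integral>s. indicator {0<..} s * F s y \<partial>lborel) \<in> Bb"
  shows "K (\<lambda>y. \<integral>s. indicator {0<..} s * F s y \<partial>lborel) x = (\<integral>s. indicator {0<..} s * K (F s) x \<partial>lborel)"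
proof -
  obtain kp km where k: "kreps K kp km" using kernel_op_kreps[OF K] by blast
  define H where "H y s = indicator {0<..} s * F s y" for y s
  define W where "W s = indicator {0<..} s * w s" for s
  have HW: "\<bar>H y s\<bar> \<le> W s" for y s
    unfolding H_def W_def using Fb[of s y] by (auto simp: indicator_def)
  have W: "integrable lborel W" using w unfolding W_def .
  have key: "integrable lborel (\<lambda>s. \<integral>y. H y s \<partial>\<mu>) \<and>
      (\<integral>s. (\<integral>y. H y s \<partial>\<mu>) \<partial>lborel) = (\<integral>y. (\<integral>s. H y s \<partial>lborel) \<partial>\<mu>)"
    if fm: "finite_measure \<mu>" and s\<mu>: "sets \<mu> = sets borel" for \<mu>
  proof -
    interpret finite_measure \<mu> by fact
    have sf: "sigma_finite_measure \<mu>" using fm by (metis finite_measure_def)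
    interpret P: pair_sigma_finite \<mu> lborel
      by (intro pair_sigma_finite.intro sf lborel.sigma_finite_measure_axioms)
    have Fm': "(\<lambda>p. indicator {0<..} (fst p) * F (fst p) (snd p)) \<in> borel_measurable (lborel \<Otimes>\<^sub>M \<mu>)"
    proof -
      have eq: "measurable (lborel \<Otimes>\<^sub>M \<mu>) (borel :: real measure) = measurable (lborel \<Otimes>\<^sub>M borel) borel"
        by (rule measurable_cong_sets[OF sets_pair_measure_cong[OF refl s\<mu>] refl])
      show ?thesis unfolding eq by (rule Fm)
    qed
    have Hm[measurable]: "case_prod H \<in> borel_measurable (\<mu> \<Otimes>\<^sub>M lborel)"
    proof -
      have "(\<lambda>q. (\<lambda>p. indicator {0<..} (fst p) * F (fst p) (snd p)) ((\<lambda>(x, y). (y, x)) q)) \<in> borel_measurable (\<mu> \<Otimes>\<^sub>M lborel)"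
        by (rule measurable_compose[OF measurable_pair_swap' Fm'])
      moreover have "(\<lambda>q. (\<lambda>p. indicator {0<..} (fst p) * F (fst p) (snd p)) ((\<lambda>(x, y). (y, x)) q)) = case_prod H"
        by (auto simp: H_def fun_eq_iff)
      ultimately show ?thesis by simp
    qed
    have sec: "(\<lambda>s. H y s) \<in> borel_measurable lborel" if "y \<in> space \<mu>" for y
      using measurable_Pair2[OF Hm that] by simp
    have sec_int: "integrable lborel (\<lambda>s. H y s)" if "y \<in> space \<mu>" for y
      by (rule Bochner_Integration.integrable_bound[OF W sec[OF that]]) (use HW in \<open>auto intro!: AE_I2 intro: order_trans[OF _ abs_ge_self]\<close>)
    have intH: "integrable (\<mu> \<Otimes>\<^sub>M lborel) (case_prod H)"
    proof (rule P.Fubini_integrable)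
      show "case_prod H \<in> borel_measurable (\<mu> \<Otimes>\<^sub>M lborel)" by (rule Hm)
      show "integrable \<mu> (\<lambda>y. \<integral>s. norm (case_prod H (y, s)) \<partial>lborel)"
      proof (rule integrable_const_bound[where B="integral\<^sup>L lborel W"])
        show "(\<lambda>y. \<integral>s. norm (case_prod H (y, s)) \<partial>lborel) \<in> borel_measurable \<mu>"
          by measurable
        show "AE y in \<mu>. norm (\<integral>s. norm (case_prod H (y, s)) \<partial>lborel) \<le> integral\<^sup>L lborel W"
        proof (rule AE_I2)
          fix y assume y: "y \<in> space \<mu>"
          have "(\<integral>s. norm (H y s) \<partial>lborel) \<le> integral\<^sup>L lborel W"
            by (rule integral_mono[OF integrable_norm[OF sec_int[OF y]] W]) (use HW in auto)
          moreover have "0 \<le> (\<integral>s. norm (H y s) \<partial>lborel)" by (rule integral_nonneg_AE) auto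
          ultimately show "norm (\<integral>s. norm (case_prod H (y, s)) \<partial>lborel) \<le> integral\<^sup>L lborel W" by simp
        qed
      qed
      show "AE y in \<mu>. integrable lborel (\<lambda>s. case_prod H (y, s))"
        using sec_int by (auto intro!: AE_I2)
    qed
    show ?thesis
      using P.integrable_snd[OF intH] P.Fubini_integral[OF intH] by simp
  qed
  have kpx: "finite_measure (kp x)" "sets (kp x) = sets borel" and kmx: "finite_measure (km x)" "sets (km x) = sets borel"
    using k unfolding kreps_def by auto
  have Kdef: "K f x = integral\<^sup>L (kp x) f - integral\<^sup>L (km x) f" if "f \<in> Bb" for f
    using k that unfolding kreps_def by blast
  have G_eq: "(\<lambda>y. \<integral>s. indicator {0<..} s * F s y \<partial>lborel) = (\<lambda>y. \<integral>s. H y s \<partial>lborel)"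
    unfolding H_def ..
  have pw: "(\<integral>y. H y s \<partial>kp x) - (\<integral>y. H y s \<partial>km x) = indicator {0<..} s * K (F s) x" for s
  proof (cases "s > 0")
    case True
    then show ?thesis unfolding H_def using Kdef[OF FBb[OF True]] by simp
  next
    case False
    then show ?thesis unfolding H_def by simp
  qed
  have "K (\<lambda>y. \<integral>s. indicator {0<..} s * F s y \<partial>lborel) x
      = (\<integral>y. (\<integral>s. H y s \<partial>lborel) \<partial>kp x) - (\<integral>y. (\<integral>s. H y s \<partial>lborel) \<partial>km x)"
    using Kdef[OF GBb] unfolding G_eq .
  also have "\<dots> = (\<integral>s. (\<integral>y. H y s \<partial>kp x) \<partial>lborel) - (\<integral>s. (\<integral>y. H y s \<partial>km x) \<partial>lborel)"
    using key[OF kpx] key[OF kmx] by simp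
  also have "\<dots> = (\<integral>s. (\<integral>y. H y s \<partial>kp x) - (\<integral>y. H y s \<partial>km x) \<partial>lborel)"
    using key[OF kpx] key[OF kmx] by (intro Bochner_Integration.integral_diff[symmetric]) auto
  also have "\<dots> = (\<integral>s. indicator {0<..} s * K (F s) x \<partial>lborel)"
    unfolding pw ..
  finally show ?thesis .
qed


context scal begin
lemma shift: "(\<integral>r. indicator {0<..} r * (exp (- l * r) * \<phi> (s + r)) \<partial>lborel) = exp (l * s) * J s"
proof -
  have "J s = (\<integral>r. indicator {s<..} (s + 1 * r) * (exp (- l * (s + 1 * r)) * \<phi> (s + 1 * r)) \<partial>lborel)"
    unfolding Jf_def using lborel_integral_real_affine[of 1 "\<lambda>r. indicator {s<..} r * (exp (- l * r) * \<phi> r)" s] by simp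
  also have "\<dots> = (\<integral>r. exp (- l * s) * (indicator {0<..} r * (exp (- l * r) * \<phi> (s + r))) \<partial>lborel)"
    by (intro Bochner_Integration.integral_cong refl) (auto simp: indicator_def algebra_simps simp flip: exp_add)
  also have "\<dots> = exp (- l * s) * (\<integral>r. indicator {0<..} r * (exp (- l * r) * \<phi> (s + r)) \<partial>lborel)"
    by simp
  finally have "exp (l * s) * J s = exp (l * s) * exp (- l * s) * (\<integral>r. indicator {0<..} r * (exp (- l * r) * \<phi> (s + r)) \<partial>lborel)"
    by simp
  also have "exp (l * s) * exp (- l * s) = 1" by (simp flip: exp_add)
  finally show ?thesis by simp
qed
end


lemma laplace_eq: "laplace T l f = (\<lambda>x. \<integral>s. indicator {0<..} s * (exp (- l * s) * T s f x) \<partial>lborel)"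
  unfolding laplace_def set_lebesgue_integral_def by simp

locale sg =
  fixes T :: "real \<Rightarrow> ('a::polish_space \<Rightarrow> real) \<Rightarrow> ('a \<Rightarrow> real)" and M \<omega> :: real
  assumes ksg: "kernel_semigroup M \<omega> T" and sF: "strong_Feller_semigroup T"
begin

definition a where "a = max \<omega> 0"
definition phi where "phi f x s = indicator {0<..} s * T s f x" for f x and s :: real

lemma a0: "0 \<le> a" unfolding a_def by simp

lemma T_kernel: "t > 0 \<Longrightarrow> kernel_op (T t)"
  using ksg unfolding kernel_semigroup_def by auto

lemma T_semi: "t > 0 \<Longrightarrow> s > 0 \<Longrightarrow> f \<in> Bb \<Longrightarrow> T (t + s) f = T t (T s f)"
  using ksg unfolding kernel_semigroup_def by auto

lemma T_opb: "t > 0 \<Longrightarrow> f \<in> Bb \<Longrightarrow> \<bar>T t f x\<bar> \<le> M * exp (\<omega> * t) * supn f"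
  using ksg unfolding kernel_semigroup_def op_bound_def by auto

lemma T_Bb: "t > 0 \<Longrightarrow> f \<in> Bb \<Longrightarrow> T t f \<in> Bb"
  using sF unfolding strong_Feller_semigroup_def Cb_def Bb_def
  by (auto intro: borel_measurable_continuous_onI)

lemma one_Bb: "(\<lambda>x. 1) \<in> Bb" by (rule BbI[where C=1]) auto

lemma supn_one: "supn (\<lambda>x::'a. 1::real) = 1"
proof -
  have o: "(\<lambda>x::'a. 1::real) \<in> Bb" by (rule one_Bb)
  show ?thesis using supn_le[of "\<lambda>x::'a. 1::real" 1] supn_ge[OF o] by simp
qed

lemma M0: "M \<ge> 0"
proof -
  have "0 \<le> \<bar>T 1 (\<lambda>x. 1) undefined\<bar>" by simp
  also have "\<dots> \<le> M * exp (\<omega> * 1) * supn (\<lambda>x::'a. 1::real)" by (rule T_opb) (auto simp: one_Bb)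
  finally show ?thesis by (simp add: supn_one zero_le_mult_iff)
qed

lemma T_bnd: "t > 0 \<Longrightarrow> f \<in> Bb \<Longrightarrow> \<bar>T t f x\<bar> \<le> (M * supn f) * exp (a * t)"
proof -
  assume t: "t > 0" and f: "f \<in> Bb"
  have "\<bar>T t f x\<bar> \<le> M * exp (\<omega> * t) * supn f" by (rule T_opb[OF t f])
  also have "\<dots> \<le> M * exp (a * t) * supn f"
    using t M0 supn_nonneg[OF f] unfolding a_def
    by (intro mult_right_mono mult_left_mono) (auto intro!: mult_right_mono)
  finally show ?thesis by (simp add: algebra_simps)
qed

lemma T_meas: "f \<in> Bb \<Longrightarrow> (\<lambda>p. indicator {0<..} (fst p) * T (fst p) f (snd p)) \<in> borel_measurable (lborel \<Otimes>\<^sub>M (borel :: 'a measure))"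
proof -
  assume f: "f \<in> Bb"
  have m: "(\<lambda>p. T (fst p) f (snd p)) \<in> borel_measurable (restrict_space (borel :: (real \<times> 'a) measure) ({0<..} \<times> UNIV))"
    using ksg f unfolding kernel_semigroup_def by auto
  have o: "({0<..} \<times> UNIV) \<inter> space (borel :: (real \<times> 'a) measure) \<in> sets borel"
    by (auto intro!: borel_open open_Times)
  have "(\<lambda>p. indicator ({0<..} \<times> UNIV) p *\<^sub>R T (fst p) f (snd p)) \<in> borel_measurable (borel :: (real \<times> 'a) measure)"
    using borel_measurable_restrict_space_iff[OF o, THEN iffD1, OF m] by simp
  moreover have "(\<lambda>p. indicator ({0<..} \<times> UNIV) p *\<^sub>R T (fst p) f (snd p)) = (\<lambda>p. indicator {0<..} (fst p) * T (fst p) f (snd p))"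
    by (auto simp: indicator_def fun_eq_iff)
  ultimately have "(\<lambda>p. indicator {0<..} (fst p) * T (fst p) f (snd p)) \<in> borel_measurable (borel \<Otimes>\<^sub>M (borel :: 'a measure))"
    by (simp add: borel_prod)
  moreover have "measurable (lborel \<Otimes>\<^sub>M (borel :: 'a measure)) (borel :: real measure) = measurable (borel \<Otimes>\<^sub>M borel) borel"
    by (rule measurable_cong_sets[OF sets_pair_measure_cong[OF sets_lborel refl] refl])
  ultimately show ?thesis by simp
qed

lemma phi_meas: "f \<in> Bb \<Longrightarrow> phi f x \<in> borel_measurable borel"
proof -
  assume f: "f \<in> Bb"
  have p: "(\<lambda>s. (s, x)) \<in> measurable lborel (lborel \<Otimes>\<^sub>M (borel :: 'a measure))" by measurable
  have "(\<lambda>s. indicator {0<..} (fst (s, x)) * T (fst (s, x)) f (snd (s, x))) \<in> borel_measurable lborel"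
    by (rule measurable_compose[OF p T_meas[OF f]])
  then show ?thesis unfolding phi_def[abs_def] by simp
qed

lemma phi_scal: "f \<in> Bb \<Longrightarrow> l > a \<Longrightarrow> scal (phi f x) (M * supn f) a l"
proof
  assume f: "f \<in> Bb" and l: "l > a"
  show "phi f x \<in> borel_measurable borel" by (rule phi_meas[OF f])
  show "\<bar>phi f x s\<bar> \<le> M * supn f * exp (a * s)" if "s > 0" for s
    unfolding phi_def using that T_bnd[OF that f, of x] by simp
  show "0 \<le> a" by (rule a0)
  show "a < l" by (rule l)
qed

lemma R_J: "laplace T l f x = Jf (phi f x) l 0"
  unfolding laplace_eq Jf_def unfolding phi_def by (intro Bochner_Integration.integral_cong refl) (auto simp: indicator_def)

lemma R_int: "f \<in> Bb \<Longrightarrow> l > a \<Longrightarrow> integrable lborel (\<lambda>s. indicator {0<..} s * (exp (- l * s) * T s f x))"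
proof -
  assume f: "f \<in> Bb" and l: "l > a"
  interpret scal "phi f x" "M * supn f" a l by (rule phi_scal[OF f l])
  have "integrable lborel (\<lambda>s. indicator {0<..} s * (exp (- l * s) * phi f x s))" using tail_int[of 0] by simp
  moreover have "(\<lambda>s. indicator {0<..} s * (exp (- l * s) * phi f x s)) = (\<lambda>s. indicator {0<..} s * (exp (- l * s) * T s f x))"
    unfolding phi_def by (auto simp: indicator_def fun_eq_iff)
  ultimately show ?thesis by simp
qed

lemma R_bnd: "f \<in> Bb \<Longrightarrow> l > a \<Longrightarrow> \<bar>laplace T l f x\<bar> \<le> M * supn f / (l - a)"
proof -
  assume f: "f \<in> Bb" and l: "l > a"
  interpret scal "phi f x" "M * supn f" a l by (rule phi_scal[OF f l])
  show ?thesis unfolding R_J using J_bound[of 0] by simp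
qed

lemma R_meas: "f \<in> Bb \<Longrightarrow> laplace T l f \<in> borel_measurable borel"
proof -
  assume f: "f \<in> Bb"
  have m1: "(\<lambda>p. indicator {0<..} (fst p) * T (fst p) f (snd p)) \<in> borel_measurable (lborel \<Otimes>\<^sub>M (borel :: 'a measure))"
    by (rule T_meas[OF f])
  have "(\<lambda>q. (\<lambda>p. indicator {0<..} (fst p) * T (fst p) f (snd p)) ((\<lambda>(x, y). (y, x)) q)) \<in> borel_measurable ((borel :: 'a measure) \<Otimes>\<^sub>M lborel)"
    by (rule measurable_compose[OF measurable_pair_swap' m1])
  then have m2: "(\<lambda>(x, s). indicator {0<..} s * T s f x) \<in> borel_measurable ((borel :: 'a measure) \<Otimes>\<^sub>M lborel)"
    by (simp add: case_prod_beta')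
  have "(\<lambda>(x, s). indicator {0<..} s * (exp (- l * s) * T s f x)) = (\<lambda>(x, s). exp (- l * s) * (\<lambda>(x, s). indicator {0<..} s * T s f x) (x, s))"
    by (auto simp: fun_eq_iff)
  also have "\<dots> \<in> borel_measurable ((borel :: 'a measure) \<Otimes>\<^sub>M lborel)"
    using m2 by measurable
  finally have m3: "(\<lambda>(x, s). indicator {0<..} s * (exp (- l * s) * T s f x)) \<in> borel_measurable ((borel :: 'a measure) \<Otimes>\<^sub>M lborel)" .
  show ?thesis unfolding laplace_eq
    by (rule lborel.borel_measurable_lebesgue_integral) (use m3 in simp)
qed

lemma R_Bb: "f \<in> Bb \<Longrightarrow> l > a \<Longrightarrow> laplace T l f \<in> Bb"
  by (rule BbI[OF R_meas R_bnd])

end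

context sg begin

lemma R_add: "f \<in> Bb \<Longrightarrow> g \<in> Bb \<Longrightarrow> l > a \<Longrightarrow> laplace T l (\<lambda>x. f x + g x) = (\<lambda>x. laplace T l f x + laplace T l g x)"
proof -
  assume f: "f \<in> Bb" and g: "g \<in> Bb" and l: "l > a"
  show ?thesis unfolding laplace_eq
  proof (rule ext)
    fix x
    have pw: "indicator {0<..} s * (exp (- l * s) * T s (\<lambda>x. f x + g x) x)
        = indicator {0<..} s * (exp (- l * s) * T s f x) + indicator {0<..} s * (exp (- l * s) * T s g x)" for s
      by (cases "s > 0") (auto simp: K_add[OF T_kernel f g] algebra_simps)
    show "(\<integral>s. indicator {0<..} s * (exp (- l * s) * T s (\<lambda>x. f x + g x) x) \<partial>lborel) =
         (\<integral>s. indicator {0<..} s * (exp (- l * s) * T s f x) \<partial>lborel) + (\<integral>s. indicator {0<..} s * (exp (- l * s) * T s g x) \<partial>lborel)"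
      unfolding pw by (rule Bochner_Integration.integral_add[OF R_int[OF f l] R_int[OF g l]])
  qed
qed

lemma R_scale: "f \<in> Bb \<Longrightarrow> laplace T l (\<lambda>x. c * f x) = (\<lambda>x. c * laplace T l f x)"
proof -
  assume f: "f \<in> Bb"
  show ?thesis unfolding laplace_eq
  proof (rule ext)
    fix x
    have pw: "indicator {0<..} s * (exp (- l * s) * T s (\<lambda>x. c * f x) x)
        = c * (indicator {0<..} s * (exp (- l * s) * T s f x))" for s
      by (cases "s > 0") (auto simp: K_scale[OF T_kernel f] algebra_simps)
    show "(\<integral>s. indicator {0<..} s * (exp (- l * s) * T s (\<lambda>x. c * f x) x) \<partial>lborel) =
         c * (\<integral>s. indicator {0<..} s * (exp (- l * s) * T s f x) \<partial>lborel)"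
      unfolding pw by simp
  qed
qed

lemma R_diff: "f \<in> Bb \<Longrightarrow> g \<in> Bb \<Longrightarrow> l > a \<Longrightarrow> laplace T l (\<lambda>x. f x - g x) = (\<lambda>x. laplace T l f x - laplace T l g x)"
  using R_add[of f "\<lambda>x. (-1) * g x" l] R_scale[of g l "-1"] Bb_scale[of g "-1"] by simp

lemma R_dct:
  assumes fs: "\<And>n. fs n \<in> Bb" and f: "f \<in> Bb" and D: "\<And>n y. \<bar>fs n y\<bar> \<le> D"
    and lim: "\<And>y. (\<lambda>n. fs n y) \<longlonglongrightarrow> f y" and l: "l > a"
  shows "(\<lambda>n. laplace T l (fs n) x) \<longlonglongrightarrow> laplace T l f x"
  unfolding laplace_eq
proof (rule integral_dominated_convergence[where w="\<lambda>s. (M * D) * (indicator {0<..} s * exp (- (l - a) * s))"])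
  show "(\<lambda>s. indicator {0<..} s * (exp (- l * s) * T s f x)) \<in> borel_measurable lborel"
    using R_int[OF f l] by (rule borel_measurable_integrable)
  show "(\<lambda>s. indicator {0<..} s * (exp (- l * s) * T s (fs n) x)) \<in> borel_measurable lborel" for n
    using R_int[OF fs l] by (rule borel_measurable_integrable)
  show "integrable lborel (\<lambda>s. (M * D) * (indicator {0<..} s * exp (- (l - a) * s)))"
    using exp_tail'(1)[of "l - a" 0] l by auto
  show "AE s in lborel. (\<lambda>n. indicator {0<..} s * (exp (- l * s) * T s (fs n) x)) \<longlonglongrightarrow> indicator {0<..} s * (exp (- l * s) * T s f x)"
  proof (rule AE_I2)
    fix s :: real
    show "(\<lambda>n. indicator {0<..} s * (exp (- l * s) * T s (fs n) x)) \<longlonglongrightarrow> indicator {0<..} s * (exp (- l * s) * T s f x)"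
    proof (cases "s > 0")
      case True
      then show ?thesis using K_dct[OF T_kernel[OF True] fs f D lim] by (intro tendsto_mult tendsto_const) auto
    qed simp
  qed
  show "AE s in lborel. norm (indicator {0<..} s * (exp (- l * s) * T s (fs n) x)) \<le> (M * D) * (indicator {0<..} s * exp (- (l - a) * s))" for n
  proof (rule AE_I2)
    fix s :: real
    show "norm (indicator {0<..} s * (exp (- l * s) * T s (fs n) x)) \<le> (M * D) * (indicator {0<..} s * exp (- (l - a) * s))"
    proof (cases "s > 0")
      case True
      have sD: "supn (fs n) \<le> D" by (rule supn_le[OF D])
      have "\<bar>T s (fs n) x\<bar> \<le> (M * supn (fs n)) * exp (a * s)" by (rule T_bnd[OF True fs])
      also have "\<dots> \<le> (M * D) * exp (a * s)" using sD M0 by (intro mult_right_mono mult_left_mono) auto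
      finally have "exp (- l * s) * \<bar>T s (fs n) x\<bar> \<le> exp (- l * s) * ((M * D) * exp (a * s))"
        by (intro mult_left_mono) auto
      also have "\<dots> = (M * D) * exp (- (l - a) * s)" by (simp add: algebra_simps flip: exp_add)
      finally show ?thesis using True by (simp add: abs_mult)
    next
      case False
      then show ?thesis by simp
    qed
  qed
qed

lemma T_R:
  assumes t: "t > 0" and f: "f \<in> Bb" and l: "l > a"
  shows "T t (laplace T l f) x = exp (l * t) * Jf (phi f x) l t"
proof -
  interpret scal "phi f x" "M * supn f" a l by (rule phi_scal[OF f l])
  have Fm: "(\<lambda>p. indicator {0<..} (fst p) * (exp (- l * fst p) * T (fst p) f (snd p))) \<in> borel_measurable (lborel \<Otimes>\<^sub>M (borel :: 'a measure))"
  proof -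
    have "(\<lambda>p. exp (- l * fst p) * (indicator {0<..} (fst p) * T (fst p) f (snd p))) \<in> borel_measurable (lborel \<Otimes>\<^sub>M (borel :: 'a measure))"
      using T_meas[OF f] by measurable
    then show ?thesis by (simp add: algebra_simps)
  qed
  have K: "T t (\<lambda>y. \<integral>s. indicator {0<..} s * (exp (- l * s) * T s f y) \<partial>lborel) x
      = (\<integral>s. indicator {0<..} s * T t (\<lambda>y. exp (- l * s) * T s f y) x \<partial>lborel)"
  proof (rule K_fubini[where w="\<lambda>s. exp (- l * s) * ((M * supn f) * exp (a * s))"])
    show "kernel_op (T t)" by (rule T_kernel[OF t])
    show "(\<lambda>p. indicator {0<..} (fst p) * (exp (- l * fst p) * T (fst p) f (snd p))) \<in> borel_measurable (lborel \<Otimes>\<^sub>M borel)"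
      by (rule Fm)
    show "\<bar>exp (- l * s) * T s f y\<bar> \<le> exp (- l * s) * ((M * supn f) * exp (a * s))" if "s > 0" for s y
      using T_bnd[OF that f, of y] by (simp add: abs_mult)
    have "(\<lambda>s. indicator {0<..} s * (exp (- l * s) * ((M * supn f) * exp (a * s)))) = (\<lambda>s. (M * supn f) * (indicator {0<..} s * exp (- (l - a) * s)))"
      by (auto simp: fun_eq_iff algebra_simps simp flip: exp_add)
    then show "integrable lborel (\<lambda>s. indicator {0<..} s * (exp (- l * s) * ((M * supn f) * exp (a * s))))"
      using exp_tail'(1)[of "l - a" 0] l by auto
    show "(\<lambda>y. exp (- l * s) * T s f y) \<in> Bb" if "s > 0" for s
      by (rule Bb_scale[OF T_Bb[OF that f]])
    show "(\<lambda>y. \<integral>s. indicator {0<..} s * (exp (- l * s) * T s f y) \<partial>lborel) \<in> Bb"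
      using R_Bb[OF f l] unfolding laplace_eq .
  qed
  have pw: "indicator {0<..} s * T t (\<lambda>y. exp (- l * s) * T s f y) x = indicator {0<..} s * (exp (- l * s) * phi f x (t + s))" for s
  proof (cases "s > 0")
    case True
    have "T t (\<lambda>y. exp (- l * s) * T s f y) x = exp (- l * s) * T t (T s f) x"
      by (rule K_scale[OF T_kernel[OF t] T_Bb[OF True f]])
    also have "T t (T s f) = T (t + s) f" using T_semi[OF t True f] by simp
    finally show ?thesis using True t unfolding phi_def by simp
  qed simp
  have "T t (laplace T l f) x = (\<integral>s. indicator {0<..} s * (exp (- l * s) * phi f x (t + s)) \<partial>lborel)"
    using K unfolding laplace_eq pw .
  also have "\<dots> = exp (l * t) * J t" by (rule shift)
  finally show ?thesis .
qed

lemma R_gen: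
  assumes f: "f \<in> Bb" and l: "l > a"
  shows "(laplace T l f, \<lambda>x. l * laplace T l f x - f x) \<in> full_gen T"
  unfolding full_gen_def
proof (intro CollectI conjI case_prodI allI impI)
  show Rb: "laplace T l f \<in> Bb" by (rule R_Bb[OF f l])
  show gb: "(\<lambda>x. l * laplace T l f x - f x) \<in> Bb" by (rule Bb_diff[OF Bb_scale[OF Rb] f])
  fix t :: real and x assume t: "t > 0"
  interpret scal "phi f x" "M * supn f" a l by (rule phi_scal[OF f l])
  have "T t (laplace T l f) x - laplace T l f x = exp (l * t) * J t - J 0"
    using T_R[OF t f l] R_J by simp
  also have "\<dots> = (\<integral>s. indicator {0<..t} s * (l * exp (l * s) * J s - phi f x s) \<partial>lborel)"
    using exist_formula[of t] t by simp
  also have "\<dots> = (\<integral>s. indicator {0<..t} s * T s (\<lambda>x. l * laplace T l f x - f x) x \<partial>lborel)"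
  proof (intro Bochner_Integration.integral_cong refl)
    fix s :: real
    show "indicator {0<..t} s * (l * exp (l * s) * J s - phi f x s) = indicator {0<..t} s * T s (\<lambda>x. l * laplace T l f x - f x) x"
    proof (cases "s \<in> {0<..t}")
      case True
      then have s: "s > 0" by simp
      have "T s (\<lambda>x. l * laplace T l f x - f x) x = T s (\<lambda>x. l * laplace T l f x) x - T s f x"
        by (rule K_diff[OF T_kernel[OF s] Bb_scale[OF Rb] f])
      also have "\<dots> = l * T s (laplace T l f) x - T s f x"
        using K_scale[OF T_kernel[OF s] Rb] by simp
      also have "\<dots> = l * exp (l * s) * J s - phi f x s"
        using T_R[OF s f l] s unfolding phi_def by simp
      finally show ?thesis by simp
    qed simp
  qed
  finally show "T t (laplace T l f) x - laplace T l f x = (LINT s:{0<..t}|lborel. T s (\<lambda>x. l * laplace T l f x - f x) x)"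
    unfolding set_lebesgue_integral_def by simp
qed

lemma gen_R:
  assumes ug: "(u, g) \<in> full_gen T" and l: "l > a"
  shows "laplace T l (\<lambda>x. l * u x - g x) = u"
proof -
  have u: "u \<in> Bb" and g: "g \<in> Bb"
    and ev: "\<And>t x. t > 0 \<Longrightarrow> T t u x - u x = (\<integral>s. indicator {0<..t} s * T s g x \<partial>lborel)"
    using ug unfolding full_gen_def set_lebesgue_integral_def by auto
  have l0: "l > 0" using l a0 by simp
  show ?thesis
  proof (rule ext)
    fix x
    interpret scal "phi g x" "M * supn g" a l by (rule phi_scal[OF g l])
    define \<Gamma> where "\<Gamma> t = (\<integral>s. indicator {0<..t} s * phi g x s \<partial>lborel)" for t
    have \<Gamma>eq: "t > 0 \<Longrightarrow> T t u x = u x + \<Gamma> t" for t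
    proof -
      assume t: "t > 0"
      have "\<Gamma> t = (\<integral>s. indicator {0<..t} s * T s g x \<partial>lborel)"
        unfolding \<Gamma>_def phi_def by (intro Bochner_Integration.integral_cong refl) (auto simp: indicator_def)
      then show ?thesis using ev[OF t, of x] by simp
    qed
    define A where "A t = indicator {0<..} t * (exp (- l * t) * T t u x)" for t
    define B where "B t = u x * (indicator {0<..} t * exp (- l * t))" for t
    define Cc where "Cc t = indicator {0<..} t * (exp (- l * t) * \<Gamma> t)" for t
    have A: "integrable lborel A" unfolding A_def by (rule R_int[OF u l])
    have B: "integrable lborel B" unfolding B_def using exp_tail'(1)[OF l0, of 0] by auto
    have ABC: "A t = B t + Cc t" for t
      unfolding A_def B_def Cc_def by (cases "t > 0") (auto simp: \<Gamma>eq algebra_simps)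
    have CAB: "Cc = (\<lambda>t. A t - B t)" using ABC by (auto simp: fun_eq_iff)
    have Cint: "integrable lborel Cc" unfolding CAB using A B by auto
    have RuA: "laplace T l u x = integral\<^sup>L lborel A" unfolding laplace_eq A_def ..
    have "integral\<^sup>L lborel A = integral\<^sup>L lborel B + integral\<^sup>L lborel Cc"
      unfolding ABC by (rule Bochner_Integration.integral_add[OF B Cint])
    moreover have "integral\<^sup>L lborel B = u x / l"
      unfolding B_def using exp_tail'(2)[OF l0, of 0] by simp
    moreover have "l * integral\<^sup>L lborel Cc = laplace T l g x"
      unfolding Cc_def \<Gamma>_def using uniq_formula unfolding R_J Jf_def by simp
    ultimately have "l * laplace T l u x = u x + laplace T l g x"
      unfolding RuA using l0 by (simp add: algebra_simps)
    then show "laplace T l (\<lambda>x. l * u x - g x) x = u x"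
      using R_diff[OF Bb_scale[OF u] g l] R_scale[OF u] by simp
  qed
qed

lemma resolvent_id:
  assumes h: "h \<in> Bb" and l: "l > a" and m: "m > a"
  shows "laplace T l h = laplace T m (\<lambda>x. h x + (m - l) * laplace T l h x)"
proof -
  have "laplace T m (\<lambda>x. m * laplace T l h x - (l * laplace T l h x - h x)) = laplace T l h"
    by (rule gen_R[OF R_gen[OF h l] m])
  moreover have "(\<lambda>x. m * laplace T l h x - (l * laplace T l h x - h x)) = (\<lambda>x. h x + (m - l) * laplace T l h x)"
    by (auto simp: algebra_simps)
  ultimately show ?thesis by simp
qed

end


definition good :: "(('a::topological_space \<Rightarrow> real) \<Rightarrow> ('a \<Rightarrow> real)) \<Rightarrow> bool" where
  "good P \<longleftrightarrow> kernel_op P \<and> (\<forall>h\<in>Bb. P h \<in> Bb) \<and> op_bound P (1/2)"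

lemma goodD:
  assumes "good P"
  shows "kernel_op P" "h \<in> Bb \<Longrightarrow> P h \<in> Bb" "h \<in> Bb \<Longrightarrow> \<bar>P h x\<bar> \<le> 1/2 * supn h"
  using assms unfolding good_def op_bound_def by auto

lemma good_add: "good P \<Longrightarrow> h \<in> Bb \<Longrightarrow> g \<in> Bb \<Longrightarrow> P (\<lambda>x. h x + g x) = (\<lambda>x. P h x + P g x)"
  using K_add[OF goodD(1)] by blast

lemma good_scale: "good P \<Longrightarrow> h \<in> Bb \<Longrightarrow> P (\<lambda>x. c * h x) = (\<lambda>x. c * P h x)"
  using K_scale[OF goodD(1)] by blast

lemma good_diff: "good P \<Longrightarrow> h \<in> Bb \<Longrightarrow> g \<in> Bb \<Longrightarrow> P (\<lambda>x. h x - g x) = (\<lambda>x. P h x - P g x)"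
  using K_diff[OF goodD(1)] by blast

lemma supn_half: "h \<in> Bb \<Longrightarrow> (\<And>x. \<bar>h x\<bar> \<le> c + 1/2 * supn h) \<Longrightarrow> supn h \<le> 2 * c"
  using supn_le[of h "c + 1/2 * supn h"] by simp

lemma fix_unique:
  assumes P: "good P" and v: "v \<in> Bb" and w: "w \<in> Bb"
    and ev: "v = (\<lambda>x. f x + P v x)" and ew: "w = (\<lambda>x. f x + P w x)"
  shows "v = w"
proof -
  define d where "d x = v x - w x" for x
  have d: "d \<in> Bb" unfolding d_def by (rule Bb_diff[OF v w])
  have dP: "d x = P d x" for x
  proof -
    have "d x = P v x - P w x" unfolding d_def by (subst ev, subst ew) simp
    also have "\<dots> = P d x" unfolding d_def good_diff[OF P v w] ..
    finally show ?thesis .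
  qed
  have "supn d \<le> 2 * 0"
    by (rule supn_half[OF d]) (use goodD(3)[OF P d] dP in simp)
  then have "\<bar>d x\<bar> \<le> 0" for x using supn_ge[OF d, of x] by simp
  then show ?thesis unfolding d_def by (auto simp: fun_eq_iff)
qed

lemma fix_exists:
  assumes P: "good P" and f: "f \<in> Bb"
  shows "\<exists>v\<in>Bb. v = (\<lambda>x. f x + P v x)"
proof -
  define it where "it k = ((\<lambda>g. (\<lambda>x. f x + P g x)) ^^ k) f" for k
  have it0: "it 0 = f" and itS: "it (Suc k) = (\<lambda>x. f x + P (it k) x)" for k
    unfolding it_def by simp_all
  have itB: "it k \<in> Bb" for k
    by (induction k) (auto simp: it0 itS f intro!: Bb_add goodD(2)[OF P])
  have itb: "\<bar>it k x\<bar> \<le> 2 * supn f" for k x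
  proof (induction k arbitrary: x)
    case 0 then show ?case using supn_ge[OF f, of x] supn_nonneg[OF f] by (simp add: it0)
  next
    case (Suc k)
    have "supn (it k) \<le> 2 * supn f" by (rule supn_le) (rule Suc.IH)
    moreover have "\<bar>P (it k) x\<bar> \<le> 1/2 * supn (it k)" by (rule goodD(3)[OF P itB])
    moreover have "\<bar>f x\<bar> \<le> supn f" by (rule supn_ge[OF f])
    ultimately show ?case unfolding itS by simp
  qed
  define D0 where "D0 = supn (\<lambda>x. it 1 x - it 0 x)"
  have dB: "(\<lambda>x. it (Suc k) x - it k x) \<in> Bb" for k by (rule Bb_diff[OF itB itB])
  have dbound: "\<bar>it (Suc k) x - it k x\<bar> \<le> D0 * (1/2) ^ k" for k x
  proof (induction k arbitrary: x)
    case 0 then show ?case unfolding D0_def using supn_ge[OF dB[of 0]] by simp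
  next
    case (Suc k)
    have "it (Suc (Suc k)) x - it (Suc k) x = P (\<lambda>x. it (Suc k) x - it k x) x"
      unfolding good_diff[OF P itB itB] by (simp add: itS[of "Suc k"] itS[of k])
    also have "\<bar>\<dots>\<bar> \<le> 1/2 * supn (\<lambda>x. it (Suc k) x - it k x)" by (rule goodD(3)[OF P dB])
    also have "\<dots> \<le> 1/2 * (D0 * (1/2) ^ k)" by (intro mult_left_mono supn_le Suc.IH) simp
    finally show ?case by simp
  qed
  have summ: "summable (\<lambda>k. it (Suc k) x - it k x)" for x
  proof (rule summable_comparison_test)
    show "\<exists>N. \<forall>n\<ge>N. norm (it (Suc n) x - it n x) \<le> D0 * (1/2) ^ n" using dbound by auto
    show "summable (\<lambda>n. D0 * (1 / 2 :: real) ^ n)" by (intro summable_mult summable_geometric) simp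
  qed
  define v where "v x = f x + (\<Sum>k. it (Suc k) x - it k x)" for x
  have tel: "it k x = f x + (\<Sum>j<k. it (Suc j) x - it j x)" for k x
    by (induction k) (simp_all add: it0)
  have lim: "(\<lambda>k. it k x) \<longlonglongrightarrow> v x" for x
  proof -
    have e: "(\<lambda>k. it k x) = (\<lambda>k. f x + (\<Sum>j<k. it (Suc j) x - it j x))" by (rule ext) (rule tel)
    show ?thesis unfolding e v_def by (intro tendsto_add tendsto_const summable_LIMSEQ summ)
  qed
  have vm: "v \<in> borel_measurable borel"
    by (rule borel_measurable_LIMSEQ_real[OF lim]) (use itB Bb_meas in auto)
  have vb: "\<bar>v x\<bar> \<le> 2 * supn f" for x
    by (rule LIMSEQ_le_const2[OF tendsto_rabs[OF lim]]) (use itb in auto)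
  have v: "v \<in> Bb" by (rule BbI[OF vm vb])
  have "(\<lambda>k. P (it k) x) \<longlonglongrightarrow> P v x" for x
    by (rule K_dct[OF goodD(1)[OF P] itB v itb lim])
  then have "(\<lambda>k. it (Suc k) x) \<longlonglongrightarrow> f x + P v x" for x
    unfolding itS by (intro tendsto_add tendsto_const)
  moreover have "(\<lambda>k. it (Suc k) x) \<longlonglongrightarrow> v x" for x
    using lim[of x] by (rule LIMSEQ_Suc)
  ultimately have "v x = f x + P v x" for x using LIMSEQ_unique by blast
  then show ?thesis using v by (intro bexI[of _ v]) auto
qed

lemma fix_bound:
  assumes P: "good P" and f: "f \<in> Bb" and v: "v \<in> Bb" and ev: "v = (\<lambda>x. f x + P v x)"
  shows "\<bar>v x\<bar> \<le> 2 * supn f"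
proof -
  have "supn v \<le> 2 * supn f"
  proof (rule supn_half[OF v])
    fix x
    have "\<bar>v x\<bar> = \<bar>f x + P v x\<bar>" by (subst ev) simp
    also have "\<dots> \<le> supn f + 1/2 * supn v"
      using supn_ge[OF f, of x] goodD(3)[OF P v, of x] by simp
    finally show "\<bar>v x\<bar> \<le> supn f + 1/2 * supn v" .
  qed
  then show ?thesis using supn_ge[OF v, of x] by simp
qed

lemma wconv_add: "wconv f F \<Longrightarrow> wconv g G \<Longrightarrow> wconv (\<lambda>n x. f n x + g n x) (\<lambda>x. F x + G x)"
  unfolding wconv_def
proof (intro conjI allI)
  assume a: "(\<exists>C. \<forall>n x. \<bar>f n x\<bar> \<le> C) \<and> (\<forall>x. (\<lambda>n. f n x) \<longlonglongrightarrow> F x)" "(\<exists>C. \<forall>n x. \<bar>g n x\<bar> \<le> C) \<and> (\<forall>x. (\<lambda>n. g n x) \<longlonglongrightarrow> G x)"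
  then obtain C1 C2 where c1: "\<forall>n x. \<bar>f n x\<bar> \<le> C1" and c2: "\<forall>n x. \<bar>g n x\<bar> \<le> C2" by blast
  show "\<exists>C. \<forall>n x. \<bar>f n x + g n x\<bar> \<le> C"
  proof (intro exI[of _ "C1 + C2"] allI)
    fix n x
    show "\<bar>f n x + g n x\<bar> \<le> C1 + C2"
      using c1[rule_format, of n x] c2[rule_format, of n x] abs_triangle_ineq[of "f n x" "g n x"] by linarith
  qed
  fix x show "(\<lambda>n. f n x + g n x) \<longlonglongrightarrow> F x + G x" using a by (intro tendsto_add) auto
qed

lemma wconv_scale: "wconv f F \<Longrightarrow> wconv (\<lambda>n x. c * f n x) (\<lambda>x. c * F x)"
  unfolding wconv_def
proof (intro conjI allI)
  assume a: "(\<exists>C. \<forall>n x. \<bar>f n x\<bar> \<le> C) \<and> (\<forall>x. (\<lambda>n. f n x) \<longlonglongrightarrow> F x)"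
  then obtain C1 where "\<forall>n x. \<bar>f n x\<bar> \<le> C1" by blast
  then show "\<exists>C. \<forall>n x. \<bar>c * f n x\<bar> \<le> C"
    by (intro exI[of _ "\<bar>c\<bar> * C1"]) (auto simp: abs_mult intro: mult_left_mono)
  fix x show "(\<lambda>n. c * f n x) \<longlonglongrightarrow> c * F x" using a by (intro tendsto_mult tendsto_const) auto
qed

lemma wconv_const: "f \<in> Bb \<Longrightarrow> wconv (\<lambda>n. f) f"
  unfolding wconv_def using supn_ge by auto

lemma wconv_diff: "wconv f F \<Longrightarrow> wconv g G \<Longrightarrow> wconv (\<lambda>n x. f n x - g n x) (\<lambda>x. F x - G x)"
  using wconv_add[of f F "\<lambda>n x. (-1) * g n x" "\<lambda>x. (-1) * G x"] wconv_scale[of g G "-1"] by simp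

lemma good_pow_Bb: "good P \<Longrightarrow> h \<in> Bb \<Longrightarrow> (P ^^ k) h \<in> Bb"
  by (induction k) (auto intro: goodD(2))

lemma good_pow:
  assumes P: "good P"
  shows "h \<in> Bb \<Longrightarrow> (P ^^ k) h \<in> Bb"
    and "h \<in> Bb \<Longrightarrow> \<bar>(P ^^ k) h x\<bar> \<le> (1/2) ^ k * supn h"
    and "h \<in> Bb \<Longrightarrow> g \<in> Bb \<Longrightarrow> (P ^^ k) (\<lambda>x. h x + g x) = (\<lambda>x. (P ^^ k) h x + (P ^^ k) g x)"
proof -
  note B = good_pow_Bb[OF P]
  show "h \<in> Bb \<Longrightarrow> (P ^^ k) h \<in> Bb" by (rule B)
  show "h \<in> Bb \<Longrightarrow> \<bar>(P ^^ k) h x\<bar> \<le> (1/2) ^ k * supn h"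
  proof (induction k arbitrary: x)
    case 0 then show ?case using supn_ge by simp
  next
    case (Suc k)
    have "\<bar>(P ^^ Suc k) h x\<bar> = \<bar>P ((P ^^ k) h) x\<bar>" by simp
    also have "\<dots> \<le> 1/2 * supn ((P ^^ k) h)" by (rule goodD(3)[OF P B[OF Suc.prems]])
    also have "\<dots> \<le> 1/2 * ((1/2) ^ k * supn h)" by (intro mult_left_mono supn_le Suc.IH Suc.prems) simp
    finally show ?case by simp
  qed
  show "h \<in> Bb \<Longrightarrow> g \<in> Bb \<Longrightarrow> (P ^^ k) (\<lambda>x. h x + g x) = (\<lambda>x. (P ^^ k) h x + (P ^^ k) g x)"
    by (induction k) (auto simp: good_add[OF P] B)
qed

lemma fix_conv:
  assumes Pn: "\<And>n. good (Pn n)" and P: "good P" and f: "f \<in> Bb"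
    and vn: "\<And>n. vn n \<in> Bb" and evn: "\<And>n. vn n = (\<lambda>x. f x + Pn n (vn n) x)"
    and v: "v \<in> Bb" and ev: "v = (\<lambda>x. f x + P v x)"
    and h2: "wconv (\<lambda>n. Pn n v) (P v)"
    and h3: "\<And>hs. (\<forall>n. hs n \<in> Bb) \<Longrightarrow> wconv hs (\<lambda>x. 0) \<Longrightarrow> wconv (\<lambda>n. Pn n (hs n)) (\<lambda>x. 0)"
  shows "wconv vn v"
proof -
  define e where "e n x = Pn n v x - P v x" for n x
  have eB: "e n \<in> Bb" for n unfolding e_def[abs_def] by (intro Bb_diff goodD(2)[OF Pn] goodD(2)[OF P] v)
  have e0: "wconv e (\<lambda>x. 0)"
    using wconv_diff[OF h2 wconv_const[OF goodD(2)[OF P v]]] unfolding e_def[abs_def] by simp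
  define w where "w n x = vn n x - v x" for n x
  have wB: "w n \<in> Bb" for n unfolding w_def[abs_def] by (rule Bb_diff[OF vn v])
  have wrec: "w n = (\<lambda>x. e n x + Pn n (w n) x)" for n
  proof -
    have "Pn n (w n) = (\<lambda>x. Pn n (vn n) x - Pn n v x)" unfolding w_def[abs_def] by (rule good_diff[OF Pn vn v])
    then show ?thesis unfolding e_def w_def fun_eq_iff
      by (subst (1) evn, subst (1) ev) (simp add: algebra_simps)
  qed
  define Q where "Q n k = (Pn n ^^ k) (e n)" for n k
  have QB: "Q n k \<in> Bb" for n k unfolding Q_def by (rule good_pow(1)[OF Pn eB])
  have Q0: "wconv (\<lambda>n. Q n k) (\<lambda>x. 0)" for k
  proof (induction k)
    case 0 then show ?case using e0 by (simp add: Q_def)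
  next
    case (Suc k)
    have "wconv (\<lambda>n. Pn n (Q n k)) (\<lambda>x. 0)" by (rule h3) (use QB Suc.IH in auto)
    then show ?case by (simp add: Q_def)
  qed
  have expand: "w n x = (\<Sum>j<K. Q n j x) + (Pn n ^^ K) (w n) x" for n K x
  proof (induction K arbitrary: x)
    case 0 then show ?case by simp
  next
    case (Suc K)
    have "(Pn n ^^ K) (w n) = (Pn n ^^ K) (\<lambda>x. e n x + Pn n (w n) x)" using wrec[of n] by simp
    also have "\<dots> = (\<lambda>x. (Pn n ^^ K) (e n) x + (Pn n ^^ K) (Pn n (w n)) x)"
      by (rule good_pow(3)[OF Pn eB goodD(2)[OF Pn wB]])
    finally have "(Pn n ^^ K) (w n) x = Q n K x + (Pn n ^^ Suc K) (w n) x"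
      unfolding Q_def by (simp add: funpow_Suc_right del: funpow.simps)
    then show ?case using Suc.IH[of x] by simp
  qed
  define W0 where "W0 = 2 * supn f + supn v"
  have wb: "\<bar>w n x\<bar> \<le> W0" for n x
    unfolding w_def W0_def using fix_bound[OF Pn f vn evn, of n x] supn_ge[OF v, of x] by simp
  have supw: "supn (w n) \<le> W0" for n by (rule supn_le[OF wb])
  have W00: "W0 \<ge> 0" using wb[of 0 undefined] by simp
  have wlim: "(\<lambda>n. w n x) \<longlonglongrightarrow> 0" for x
  proof (rule LIMSEQ_I)
    fix r :: real assume r: "r > 0"
    have r2: "r / 2 > 0" using r by simp
    have "(\<lambda>K. (1/2::real) ^ K * W0) \<longlonglongrightarrow> 0 * W0"
      by (intro tendsto_mult tendsto_const LIMSEQ_power_zero) simp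
    then obtain K0 where K0: "\<forall>n\<ge>K0. norm ((1/2::real) ^ n * W0 - 0 * W0) < r / 2"
      using LIMSEQ_D[OF _ r2] by blast
    define K where "K = K0"
    have K: "(1/2::real) ^ K * W0 < r / 2" using K0[rule_format, of K] W00 unfolding K_def by simp
    have lim0: "(\<lambda>n. \<Sum>j<K. Q n j x) \<longlonglongrightarrow> 0"
      by (rule tendsto_null_sum) (use Q0 in \<open>auto simp: wconv_def\<close>)
    obtain N where N: "\<forall>n\<ge>N. norm ((\<Sum>j<K. Q n j x) - 0) < r / 2"
      using LIMSEQ_D[OF lim0 r2] by blast
    show "\<exists>no. \<forall>n\<ge>no. norm (w n x - 0) < r"
    proof (intro exI allI impI)
      fix n assume n: "n \<ge> N"
      have "\<bar>(Pn n ^^ K) (w n) x\<bar> \<le> (1/2) ^ K * supn (w n)" by (rule good_pow(2)[OF Pn wB])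
      also have "\<dots> \<le> (1/2) ^ K * W0" by (intro mult_left_mono supw) simp
      finally have "\<bar>(Pn n ^^ K) (w n) x\<bar> < r / 2" using K by simp
      moreover have "\<bar>\<Sum>j<K. Q n j x\<bar> < r / 2" using N n by simp
      ultimately show "norm (w n x - 0) < r" unfolding expand[of n x K] by simp
    qed
  qed
  show ?thesis unfolding wconv_def
  proof (intro conjI allI)
    show "\<exists>C. \<forall>n x. \<bar>vn n x\<bar> \<le> C" using fix_bound[OF Pn f vn evn] by blast
    fix x
    have "(\<lambda>n. w n x + v x) \<longlonglongrightarrow> 0 + v x" by (intro tendsto_add wlim tendsto_const)
    then show "(\<lambda>n. vn n x) \<longlonglongrightarrow> v x" unfolding w_def by simp
  qed
qed


context sg begin

lemma a_ge: "\<omega> \<le> a" unfolding a_def by simp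

lemma adm:
  assumes "admissible_pert T \<omega> D Bop"
  shows "D \<subseteq> Bb" "Domain (full_gen T) \<subseteq> D" "\<And>f. f \<in> D \<Longrightarrow> Bop f \<in> Bb"
    "\<And>f g. f \<in> D \<Longrightarrow> g \<in> D \<Longrightarrow> Bop (\<lambda>x. f x + g x) = (\<lambda>x. Bop f x + Bop g x)"
    "\<And>f c. f \<in> D \<Longrightarrow> Bop (\<lambda>x. c * f x) = (\<lambda>x. c * Bop f x)"
    "\<And>f c. f \<in> D \<Longrightarrow> (\<lambda>x. c * f x) \<in> D"
    "\<And>l. l > \<omega> \<Longrightarrow> kernel_op (\<lambda>f. Bop (laplace T l f))"
  using assms unfolding admissible_pert_def by blast+

lemma R_in_D:
  assumes A: "admissible_pert T \<omega> D Bop" and h: "h \<in> Bb" and l: "l > a"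
  shows "laplace T l h \<in> D"
proof -
  have "laplace T l h \<in> Domain (full_gen T)" using R_gen[OF h l] by blast
  then show ?thesis using adm(2)[OF A] by blast
qed

lemma PR_Bb:
  assumes A: "admissible_pert T \<omega> D Bop" and h: "h \<in> Bb" and l: "l > a"
  shows "Bop (laplace T l h) \<in> Bb"
  by (rule adm(3)[OF A R_in_D[OF A h l]])

lemma PR_split:
  assumes A: "admissible_pert T \<omega> D Bop" and h: "h \<in> Bb" and l: "l > a" and m: "m > a"
  shows "Bop (laplace T l h) = (\<lambda>x. Bop (laplace T m h) x + (m - l) * Bop (laplace T m (laplace T l h)) x)"
proof -
  have Rl: "laplace T l h \<in> Bb" by (rule R_Bb[OF h l])
  have "laplace T l h = laplace T m (\<lambda>x. h x + (m - l) * laplace T l h x)"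
    by (rule resolvent_id[OF h l m])
  also have "\<dots> = (\<lambda>x. laplace T m h x + laplace T m (\<lambda>x. (m - l) * laplace T l h x) x)"
    by (rule R_add[OF h Bb_scale[OF Rl] m])
  also have "\<dots> = (\<lambda>x. laplace T m h x + (m - l) * laplace T m (laplace T l h) x)"
    unfolding R_scale[OF Rl] ..
  finally have e: "laplace T l h = (\<lambda>x. laplace T m h x + (m - l) * laplace T m (laplace T l h) x)" .
  have d1: "laplace T m h \<in> D" by (rule R_in_D[OF A h m])
  have d2: "laplace T m (laplace T l h) \<in> D" by (rule R_in_D[OF A Rl m])
  have "Bop (laplace T l h) = (\<lambda>x. Bop (laplace T m h) x + Bop (\<lambda>x. (m - l) * laplace T m (laplace T l h) x) x)"
    by (subst e, rule adm(4)[OF A d1 adm(6)[OF A d2]])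
  also have "\<dots> = (\<lambda>x. Bop (laplace T m h) x + (m - l) * Bop (laplace T m (laplace T l h)) x)"
    unfolding adm(5)[OF A d2] ..
  finally show ?thesis .
qed

lemma wconv_R:
  assumes hs: "\<And>n. hs n \<in> Bb" and h: "h \<in> Bb" and w: "wconv hs h" and l: "l > a"
  shows "wconv (\<lambda>n. laplace T l (hs n)) (laplace T l h)"
proof -
  obtain C where C: "\<And>n x. \<bar>hs n x\<bar> \<le> C" using w unfolding wconv_def by blast
  have lim: "\<And>y. (\<lambda>n. hs n y) \<longlonglongrightarrow> h y" using w unfolding wconv_def by blast
  show ?thesis unfolding wconv_def
  proof (intro conjI allI exI)
    fix n x
    have "\<bar>laplace T l (hs n) x\<bar> \<le> M * supn (hs n) / (l - a)" by (rule R_bnd[OF hs l])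
    also have "\<dots> \<le> M * C / (l - a)"
      using l M0 supn_le[OF C] by (intro divide_right_mono mult_left_mono) auto
    finally show "\<bar>laplace T l (hs n) x\<bar> \<le> M * C / (l - a)" .
  next
    fix x show "(\<lambda>n. laplace T l (hs n) x) \<longlonglongrightarrow> laplace T l h x"
      by (rule R_dct[OF hs h C lim l])
  qed
qed

lemma R_zero: "laplace T l (\<lambda>x. 0) = (\<lambda>x. 0)"
  using R_scale[OF Bb_zero, of l 0] by simp

lemma hyp2ext:
  assumes A: "admissible_pert T \<omega> D B" and An: "\<And>n. admissible_pert T \<omega> (Dn n) (Bn n)"
    and hyp2: "\<forall>h\<in>Bb. \<exists>l0. \<forall>l\<ge>l0. l > \<omega> \<longrightarrow> wconv (\<lambda>n. Bn n (laplace T l h)) (B (laplace T l h))"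
    and h: "h \<in> Bb" and l: "l > a"
  shows "wconv (\<lambda>n. Bn n (laplace T l h)) (B (laplace T l h))"
proof -
  have Rl: "laplace T l h \<in> Bb" by (rule R_Bb[OF h l])
  obtain l1 where l1: "\<forall>l\<ge>l1. l > \<omega> \<longrightarrow> wconv (\<lambda>n. Bn n (laplace T l h)) (B (laplace T l h))"
    using bspec[OF hyp2 h] by blast
  obtain l2 where l2: "\<forall>m\<ge>l2. m > \<omega> \<longrightarrow> wconv (\<lambda>n. Bn n (laplace T m (laplace T l h))) (B (laplace T m (laplace T l h)))"
    using bspec[OF hyp2 Rl] by blast
  define m where "m = max (max l1 l2) (l + 1)"
  have m: "m > a" "m > \<omega>" "m \<ge> l1" "m \<ge> l2" using l a_ge unfolding m_def by auto
  have w1: "wconv (\<lambda>n. Bn n (laplace T m h)) (B (laplace T m h))" using l1[rule_format, OF m(3) m(2)] .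
  have w2: "wconv (\<lambda>n. Bn n (laplace T m (laplace T l h))) (B (laplace T m (laplace T l h)))" using l2[rule_format, OF m(4) m(2)] .
  have "wconv (\<lambda>n x. Bn n (laplace T m h) x + (m - l) * Bn n (laplace T m (laplace T l h)) x)
        (\<lambda>x. B (laplace T m h) x + (m - l) * B (laplace T m (laplace T l h)) x)"
    by (rule wconv_add[OF w1 wconv_scale[OF w2]])
  then show ?thesis
    unfolding PR_split[OF A h l m(1)] PR_split[OF An h l m(1)] .
qed

lemma hyp3ext:
  assumes An: "\<And>n. admissible_pert T \<omega> (Dn n) (Bn n)"
    and hyp3: "\<forall>hs. (\<forall>n. hs n \<in> Bb) \<and> wconv hs (\<lambda>x. 0) \<longrightarrow>
                 (\<exists>l0. \<forall>l\<ge>l0. l > \<omega> \<longrightarrow> wconv (\<lambda>n. Bn n (laplace T l (hs n))) (\<lambda>x. 0))"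
    and hs: "\<forall>n. hs n \<in> Bb" and w: "wconv hs (\<lambda>x. 0)" and l: "l > a"
  shows "wconv (\<lambda>n. Bn n (laplace T l (hs n))) (\<lambda>x. 0)"
proof -
  have Rb: "\<forall>n. laplace T l (hs n) \<in> Bb" using R_Bb hs l by blast
  have Rw: "wconv (\<lambda>n. laplace T l (hs n)) (\<lambda>x. 0)"
    using wconv_R[of hs "\<lambda>x. 0" l] hs w l Bb_zero unfolding R_zero by blast
  obtain l1 where l1: "\<forall>l\<ge>l1. l > \<omega> \<longrightarrow> wconv (\<lambda>n. Bn n (laplace T l (hs n))) (\<lambda>x. 0)"
    using hyp3[rule_format, OF conjI[OF hs w]] by blast
  obtain l2 where l2: "\<forall>m\<ge>l2. m > \<omega> \<longrightarrow> wconv (\<lambda>n. Bn n (laplace T m (laplace T l (hs n)))) (\<lambda>x. 0)"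
    using hyp3[rule_format, OF conjI[OF Rb Rw]] by blast
  define m where "m = max (max l1 l2) (l + 1)"
  have m: "m > a" "m > \<omega>" "m \<ge> l1" "m \<ge> l2" using l a_ge unfolding m_def by auto
  have w1: "wconv (\<lambda>n. Bn n (laplace T m (hs n))) (\<lambda>x. 0)" using l1[rule_format, OF m(3) m(2)] .
  have w2: "wconv (\<lambda>n. Bn n (laplace T m (laplace T l (hs n)))) (\<lambda>x. 0)" using l2[rule_format, OF m(4) m(2)] .
  have "wconv (\<lambda>n x. Bn n (laplace T m (hs n)) x + (m - l) * Bn n (laplace T m (laplace T l (hs n))) x)
        (\<lambda>x. 0 + (m - l) * 0)"
    by (rule wconv_add[OF w1 wconv_scale[OF w2]])
  moreover have "(\<lambda>n x. Bn n (laplace T m (hs n)) x + (m - l) * Bn n (laplace T m (laplace T l (hs n))) x)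
      = (\<lambda>n. Bn n (laplace T l (hs n)))"
  proof (rule ext)
    fix n
    show "(\<lambda>x. Bn n (laplace T m (hs n)) x + (m - l) * Bn n (laplace T m (laplace T l (hs n))) x) = Bn n (laplace T l (hs n))"
      using PR_split[OF An[of n] hs[rule_format, of n] l m(1)] by simp
  qed
  ultimately show ?thesis by simp
qed

lemma char:
  assumes A: "admissible_pert T \<omega> D Bop" and l: "l > a" and f: "f \<in> Bb"
  shows "(f, u) \<in> pert_res_rel (full_gen T) Bop l \<longleftrightarrow>
    (\<exists>v\<in>Bb. v = (\<lambda>x. f x + Bop (laplace T l v) x) \<and> u = laplace T l v)"
proof
  assume "(f, u) \<in> pert_res_rel (full_gen T) Bop l"
  then obtain g where ug: "(u, g) \<in> full_gen T" and fe: "f = (\<lambda>x. l * u x - (g x + Bop u x))"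
    unfolding pert_res_rel_def by blast
  have u: "u \<in> Bb" and g: "g \<in> Bb" using ug unfolding full_gen_def by auto
  define v where "v x = l * u x - g x" for x
  have v: "v \<in> Bb" unfolding v_def[abs_def] by (rule Bb_diff[OF Bb_scale[OF u] g])
  have Rv: "laplace T l v = u" unfolding v_def[abs_def] by (rule gen_R[OF ug l])
  have e: "v = (\<lambda>x. f x + Bop (laplace T l v) x)"
  proof (rule ext)
    fix x show "v x = f x + Bop (laplace T l v) x" unfolding Rv fe v_def by simp
  qed
  show "\<exists>v\<in>Bb. v = (\<lambda>x. f x + Bop (laplace T l v) x) \<and> u = laplace T l v"
    by (intro bexI[of _ v] conjI e Rv[symmetric] v)
next
  assume "\<exists>v\<in>Bb. v = (\<lambda>x. f x + Bop (laplace T l v) x) \<and> u = laplace T l v"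
  then obtain v where v: "v \<in> Bb" and evu: "v = (\<lambda>x. f x + Bop (laplace T l v) x) \<and> u = laplace T l v"
    by (rule bexE)
  note ev = conjunct1[OF evu] and u = conjunct2[OF evu]
  have ug: "(u, \<lambda>x. l * u x - v x) \<in> full_gen T" unfolding u by (rule R_gen[OF v l])
  have fe: "f = (\<lambda>x. l * u x - ((l * u x - v x) + Bop u x))"
  proof (rule ext)
    fix x
    have "v x = f x + Bop (laplace T l v) x" by (subst ev) simp
    then show "f x = l * u x - ((l * u x - v x) + Bop u x)" unfolding u by simp
  qed
  show "(f, u) \<in> pert_res_rel (full_gen T) Bop l"
    unfolding pert_res_rel_def
  proof (intro CollectI exI conjI)
    show "(f, u) = ((\<lambda>x. l * u x - ((l * u x - v x) + Bop u x)), u)" using fe by simp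
    show "(u, \<lambda>x. l * u x - v x) \<in> full_gen T" by (rule ug)
  qed
qed

lemma char_unique:
  assumes A: "admissible_pert T \<omega> D Bop" and l: "l > a" and f: "f \<in> Bb"
    and G: "good (\<lambda>h. Bop (laplace T l h))"
    and v: "v \<in> Bb" and ev: "v = (\<lambda>x. f x + Bop (laplace T l v) x)"
  shows "\<exists>!u. (f, u) \<in> pert_res_rel (full_gen T) Bop l"
    "pert_res (full_gen T) Bop l f = laplace T l v"
proof -
  have ex: "(f, laplace T l v) \<in> pert_res_rel (full_gen T) Bop l"
    by (rule char[OF A l f, THEN iffD2]) (intro bexI[of _ v] conjI ev refl v)
  have un: "u = laplace T l v" if "(f, u) \<in> pert_res_rel (full_gen T) Bop l" for u
  proof -
    have "\<exists>v'\<in>Bb. v' = (\<lambda>x. f x + Bop (laplace T l v') x) \<and> u = laplace T l v'"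
      by (rule iffD1[OF char[OF A l f] that])
    then obtain v' where v'1: "v' \<in> Bb" and v'2: "v' = (\<lambda>x. f x + Bop (laplace T l v') x) \<and> u = laplace T l v'"
      by (rule bexE)
    note v' = v'1 conjunct1[OF v'2] conjunct2[OF v'2]
    have "v' = v" using fix_unique[OF G v'(1) v v'(2) ev] by simp
    then show ?thesis using v'(3) by simp
  qed
  show "\<exists>!u. (f, u) \<in> pert_res_rel (full_gen T) Bop l" using ex un by blast
  show "pert_res (full_gen T) Bop l f = laplace T l v"
    unfolding pert_res_def using ex un by (rule the_equality)
qed

end


theorem proposition5p2:
  fixes T :: "real \<Rightarrow> ('a::polish_space \<Rightarrow> real) \<Rightarrow> ('a \<Rightarrow> real)"
    and M \<omega> :: real
    and DB :: "('a \<Rightarrow> real) set" and B :: "('a \<Rightarrow> real) \<Rightarrow> ('a \<Rightarrow> real)"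
    and DBn :: "nat \<Rightarrow> ('a \<Rightarrow> real) set" and Bn :: "nat \<Rightarrow> ('a \<Rightarrow> real) \<Rightarrow> ('a \<Rightarrow> real)"
  assumes loc_compact: "locally_compact_space (euclidean :: 'a topology)"
    and semigroup: "kernel_semigroup M \<omega> T"
    and Cb_sg: "Cb_semigroup T"
    and strong_Feller: "strong_Feller_semigroup T"
    and B_adm: "admissible_pert T \<omega> DB B"
    and Bn_adm: "\<And>n. admissible_pert T \<omega> (DBn n) (Bn n)"
    and hyp1: "\<forall>\<epsilon>>0. \<exists>l0. \<forall>l\<ge>l0. l > \<omega> \<longrightarrow>
                 (\<forall>n. op_bound (\<lambda>f. Bn n (laplace T l f)) \<epsilon>)"
    and hyp2: "\<forall>h\<in>Bb. \<exists>l0. \<forall>l\<ge>l0. l > \<omega> \<longrightarrow>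
                 wconv (\<lambda>n. Bn n (laplace T l h)) (B (laplace T l h))"
    and hyp3: "\<forall>hs. (\<forall>n. hs n \<in> Bb) \<and> wconv hs (\<lambda>x. 0) \<longrightarrow>
                 (\<exists>l0. \<forall>l\<ge>l0. l > \<omega> \<longrightarrow>
                    wconv (\<lambda>n. Bn n (laplace T l (hs n))) (\<lambda>x. 0))"
  shows "\<exists>l0. \<forall>l\<ge>l0. \<forall>f\<in>Bb.
           (\<exists>!u. (f, u) \<in> pert_res_rel (full_gen T) B l) \<and>
           (\<forall>n. \<exists>!u. (f, u) \<in> pert_res_rel (full_gen T) (Bn n) l) \<and>
           wconv (\<lambda>n. pert_res (full_gen T) (Bn n) l f) (pert_res (full_gen T) B l f)"
proof -
  interpret sg T M \<omega> by (rule sg.intro[OF semigroup strong_Feller])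
  obtain lam1 where h1: "\<forall>l\<ge>lam1. l > \<omega> \<longrightarrow> (\<forall>n. op_bound (\<lambda>f. Bn n (laplace T l f)) (1/2))"
    using hyp1[rule_format, of "1/2"] by auto
  define l0 where "l0 = max lam1 (a + 1)"
  show ?thesis
  proof (intro exI[of _ l0] allI impI ballI)
    fix l :: real and f :: "'a \<Rightarrow> real" assume l: "l \<ge> l0" and f: "f \<in> Bb"
    have la: "l > a" and lw: "l > \<omega>" and l1: "l \<ge> lam1" using l a_ge unfolding l0_def by auto
    have ob: "op_bound (\<lambda>f. Bn n (laplace T l f)) (1/2)" for n using h1 l1 lw by blast
    have Gn: "good (\<lambda>h. Bn n (laplace T l h))" for n
      unfolding good_def using adm(7)[OF Bn_adm lw] PR_Bb[OF Bn_adm _ la] ob by blast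
    have G: "good (\<lambda>h. B (laplace T l h))"
      unfolding good_def
    proof (intro conjI ballI)
      show "kernel_op (\<lambda>h. B (laplace T l h))" by (rule adm(7)[OF B_adm lw])
      show "B (laplace T l h) \<in> Bb" if "h \<in> Bb" for h by (rule PR_Bb[OF B_adm that la])
      show "op_bound (\<lambda>h. B (laplace T l h)) (1 / 2)" unfolding op_bound_def
      proof (intro ballI allI)
        fix h :: "'a \<Rightarrow> real" and x :: 'a assume h: "h \<in> Bb"
        have w: "wconv (\<lambda>n. Bn n (laplace T l h)) (B (laplace T l h))"
          by (rule hyp2ext[OF B_adm Bn_adm hyp2 h la])
        have lim: "(\<lambda>n. Bn n (laplace T l h) x) \<longlonglongrightarrow> B (laplace T l h) x"
          using w unfolding wconv_def by blast
        have "\<bar>Bn n (laplace T l h) x\<bar> \<le> 1/2 * supn h" for n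
          using ob[of n] h unfolding op_bound_def by blast
        then show "\<bar>B (laplace T l h) x\<bar> \<le> 1/2 * supn h"
          by (intro LIMSEQ_le_const2[OF tendsto_rabs[OF lim]]) auto
      qed
    qed
    obtain v :: "'a \<Rightarrow> real" where v: "v \<in> Bb" and ev0: "v = (\<lambda>x. f x + B (laplace T l v) x)"
      using fix_exists[OF G f] by (rule bexE)
    have ex: "\<forall>n. \<exists>w. w \<in> Bb \<and> w = (\<lambda>x. f x + Bn n (laplace T l w) x)"
    proof
      fix n
      show "\<exists>w. w \<in> Bb \<and> w = (\<lambda>x. f x + Bn n (laplace T l w) x)"
        using fix_exists[OF Gn f, of n] unfolding Bex_def .
    qed
    obtain vn :: "nat \<Rightarrow> 'a \<Rightarrow> real" where vn: "\<forall>n. vn n \<in> Bb \<and> vn n = (\<lambda>x. f x + Bn n (laplace T l (vn n)) x)"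
      using choice[OF ex] by (rule exE)
    have vnB: "vn n \<in> Bb" for n using vn by blast
    have vnE: "vn n = (\<lambda>x. f x + Bn n (laplace T l (vn n)) x)" for n using conjunct2[OF spec[OF vn, of n]] .
    note cu = char_unique[OF B_adm la f G v ev0]
    have cun1: "\<exists>!u. (f, u) \<in> pert_res_rel (full_gen T) (Bn n) l" for n
      by (rule char_unique(1)[OF Bn_adm la f Gn vnB vnE])
    have cun2: "pert_res (full_gen T) (Bn n) l f = laplace T l (vn n)" for n
      by (rule char_unique(2)[OF Bn_adm la f Gn vnB vnE])
    have wv: "wconv vn v"
    proof (rule fix_conv[of "\<lambda>n h. Bn n (laplace T l h)" "\<lambda>h. B (laplace T l h)" f vn v])
      show "good (\<lambda>h. Bn n (laplace T l h))" for n by (rule Gn)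
      show "good (\<lambda>h. B (laplace T l h))" by (rule G)
      show "f \<in> Bb" by (rule f)
      show "vn n \<in> Bb" for n by (rule vnB)
      show "vn n = (\<lambda>x. f x + Bn n (laplace T l (vn n)) x)" for n by (rule vnE)
      show "v \<in> Bb" by (rule v)
      show "v = (\<lambda>x. f x + B (laplace T l v) x)" by (rule ev0)
      show "wconv (\<lambda>n. Bn n (laplace T l v)) (B (laplace T l v))"
        by (rule hyp2ext[OF B_adm Bn_adm hyp2 v la])
      show "wconv (\<lambda>n. Bn n (laplace T l (hs n))) (\<lambda>x. 0)" if "\<forall>n. hs n \<in> Bb" "wconv hs (\<lambda>x. 0)" for hs
        by (rule hyp3ext[OF Bn_adm hyp3 that la])
    qed
    have "wconv (\<lambda>n. laplace T l (vn n)) (laplace T l v)"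
      by (rule wconv_R[OF vnB v wv la])
    moreover have "(\<lambda>n. pert_res (full_gen T) (Bn n) l f) = (\<lambda>n. laplace T l (vn n))"
      using cun2 by (rule ext)
    ultimately show "(\<exists>!u. (f, u) \<in> pert_res_rel (full_gen T) B l) \<and>
           (\<forall>n. \<exists>!u. (f, u) \<in> pert_res_rel (full_gen T) (Bn n) l) \<and>
           wconv (\<lambda>n. pert_res (full_gen T) (Bn n) l f) (pert_res (full_gen T) B l f)"
      using cu cun1 by simp
  qed
qed


end
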